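(* Let $l,m$ be positive integers, $n=l+m$, $k=\operatorname{lcm}(l,m)$, let $\alpha_1,\dots,\alpha_l,\beta_1,\dots,\beta_m\ge 0$ be given (in this order), not all zero, with $\alpha_1+\dots+\alpha_l=\beta_1+\dots+\beta_m$, put $\boldsymbol\nu=(\alpha_1,\dots,\alpha_l,-\beta_1,\dots,-\beta_m)$, and let $\boldsymbol\rho=(\rho_1,\dots,\rho_k)$ with every $\rho_i>1$. Then there are unique $k$-tuples of real numbers $(u_0,\dots,u_{k-1})$ and $(v_0,\dots,v_{k-1})$ such that, with the points ${\bf a}_r^t,{\bf b}_r^t$ and segments $\mathcal A_r^t,\mathcal B_r^t$ defined from them as in the context, every segment $\mathcal A_r^t$ ($0\le r<k$, $t\in\mathbb Z$) has slope $\alpha_{r+1}$, every segment $\mathcal B_r^t$ ($0\le r<k$, $t\in\mathbb Z$) has slope $-\beta_{r+1}$, and the set $$\mathcal G(\boldsymbol\nu,\boldsymbol\rho)=\{{\bf 0}\}\cup\bigcup_{t\in\mathbb Z}\bigcup_{0\le r<k}\left(\mathcal A_r^t\cup\mathcal B_r^t\right)\subset\mathbb R^2$$ is a regular $\boldsymbol\nu$-graph.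
   Context: Indexing conventions: for an integer $r$, $\alpha_r:=\alpha_i$ where $1\le i\le l$ and $r\equiv i\pmod l$; $\beta_r:=\beta_j$ where $1\le j\le m$ and $r\equiv j\pmod m$; $\rho_r:=\rho_h$ where $1\le h\le k$ and $r\equiv h\pmod k$. Set $\sigma_0=1$, $\sigma_r=\rho_1\cdots\rho_r$ for $1\le r\le k$, $\tau=\sigma_k=\rho_1\cdots\rho_k$, and for arbitrary $r=sk+h$ with $s\in\mathbb Z$, $0\le h<k$, set $\sigma_r=\tau^s\sigma_h$, $u_r=u_h$, $v_r=v_h$. For $r,t\in\mathbb Z$ define points ${\bf a}_r^t=\tau^t\sigma_r(1,u_r)$ and ${\bf b}_r^t=\tau^t\sigma_r(1,v_r)$ in $\mathbb R^2$, and for $0\le r<k$, $t\in\mathbb Z$ the closed line segments $\mathcal A_r^t=[{\bf a}_r^t,{\bf b}_{r+l}^t]$ and $\mathcal B_r^t=[{\bf b}_r^t,{\bf a}_{r+m}^t]$. A $\boldsymbol\nu$-system is an $n$-tuple of functions $P_1,\dots,P_n:[0,\infty)\to\mathbb R$ which are continuous, satisfy $P_1\le P_2\le\dots\le P_n$ and $P_1(0)=\dots=P_n(0)=0$, are piecewise linear with only finitely many linear pieces in any interval with positive endpoints, have slopes among $\alpha_1,\dots,\alpha_l,-\beta_1,\dots,-\beta_m$, and such that on every interval where each $P_i$ is linear, the slopes of $P_1,\dots,P_n$ are the numbers $\alpha_1,\dots,\alpha_l,-\beta_1,\dots,-\beta_m$ in some order. A $\boldsymbol\nu$-graph is the union of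 the graphs of the functions of a $\boldsymbol\nu$-system. A $\boldsymbol\nu$-system (and its graph) is regular if the graph is invariant under the map $\boldsymbol\eta\mapsto\tau'\boldsymbol\eta$ of $\mathbb R^2$ for some $\tau'>1$. *)

theory Defs
  imports "HOL-Analysis.Analysis" "HOL-Library.Multiset"
begin

text \<open>alpha_r := alpha_i with 1 <= i <= l and r = i (mod l); the family is given on 1..l.\<close>
definition cyc :: "nat \<Rightarrow> (nat \<Rightarrow> real) \<Rightarrow> int \<Rightarrow> real" where
  "cyc l f r = f (nat ((r - 1) mod int l) + 1)"

definition tau_of :: "nat \<Rightarrow> (nat \<Rightarrow> real) \<Rightarrow> real" where
  "tau_of k rho = (\<Prod>i\<in>{1..k}. rho i)"

definition sigma_of :: "nat \<Rightarrow> (nat \<Rightarrow> real) \<Rightarrow> int \<Rightarrow> real" where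
  "sigma_of k rho r =
     tau_of k rho powi (r div int k) * (\<Prod>i\<in>{1..nat (r mod int k)}. rho i)"

definition per :: "nat \<Rightarrow> real list \<Rightarrow> int \<Rightarrow> real" where
  "per k u r = u ! nat (r mod int k)"

definition pt :: "nat \<Rightarrow> (nat \<Rightarrow> real) \<Rightarrow> real list \<Rightarrow> int \<Rightarrow> int \<Rightarrow> real \<times> real" where
  "pt k rho w r t = (tau_of k rho powi t * sigma_of k rho r) *\<^sub>R (1, per k w r)"

definition segA :: "nat \<Rightarrow> nat \<Rightarrow> (nat \<Rightarrow> real) \<Rightarrow> real list \<Rightarrow> real list \<Rightarrow> int \<Rightarrow> int \<Rightarrow> (real \<times> real) set" where
  "segA k l rho u v r t = closed_segment (pt k rho u r t) (pt k rho v (r + int l) t)"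

definition segB :: "nat \<Rightarrow> nat \<Rightarrow> (nat \<Rightarrow> real) \<Rightarrow> real list \<Rightarrow> real list \<Rightarrow> int \<Rightarrow> int \<Rightarrow> (real \<times> real) set" where
  "segB k m rho u v r t = closed_segment (pt k rho v r t) (pt k rho u (r + int m) t)"

definition slope :: "real \<times> real \<Rightarrow> real \<times> real \<Rightarrow> real" where
  "slope p q = (snd q - snd p) / (fst q - fst p)"

definition Gset :: "nat \<Rightarrow> nat \<Rightarrow> nat \<Rightarrow> (nat \<Rightarrow> real) \<Rightarrow> real list \<Rightarrow> real list \<Rightarrow> (real \<times> real) set" where
  "Gset k l m rho u v = {0} \<union> (\<Union>t::int. \<Union>r\<in>{0..<int k}. segA k l rho u v r t \<union> segB k m rho u v r t)"

definition affine_with_slope :: "(real \<Rightarrow> real) \<Rightarrow> real set \<Rightarrow> real \<Rightarrow> bool" where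
  "affine_with_slope f S s \<longleftrightarrow> (\<exists>c. \<forall>x\<in>S. f x = s * x + c)"

text \<open>P 1, ..., P n are the functions (only their values on [0,inf) matter);
  nu is the list of the n slopes.\<close>
definition nu_system :: "nat \<Rightarrow> real list \<Rightarrow> (nat \<Rightarrow> real \<Rightarrow> real) \<Rightarrow> bool" where
  "nu_system n nu P \<longleftrightarrow>
     (\<forall>i\<in>{1..n}. continuous_on {0..} (P i)) \<and>
     (\<forall>i\<in>{1..<n}. \<forall>x\<ge>0. P i x \<le> P (Suc i) x) \<and>
     (\<forall>i\<in>{1..n}. P i 0 = 0) \<and>
     (\<forall>a b. 0 < a \<longrightarrow> a < b \<longrightarrow>
        (\<exists>X. finite X \<and> a \<in> X \<and> b \<in> X \<and> X \<subseteq> {a..b} \<and>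
           (\<forall>c\<in>X. \<forall>d\<in>X. c < d \<longrightarrow> {c<..<d} \<inter> X = {} \<longrightarrow>
              (\<forall>i\<in>{1..n}. \<exists>s. affine_with_slope (P i) {c..d} s)))) \<and>
     (\<forall>i\<in>{1..n}. \<forall>c d s. 0 \<le> c \<longrightarrow> c < d \<longrightarrow> affine_with_slope (P i) {c..d} s \<longrightarrow> s \<in> set nu) \<and>
     (\<forall>c d. 0 \<le> c \<longrightarrow> c < d \<longrightarrow> (\<forall>i\<in>{1..n}. \<exists>s. affine_with_slope (P i) {c..d} s) \<longrightarrow>
        (\<exists>s::nat \<Rightarrow> real. (\<forall>i\<in>{1..n}. affine_with_slope (P i) {c..d} (s i)) \<and>
            mset (map s [1..<n+1]) = mset nu))"

definition nu_graph_of :: "nat \<Rightarrow> (nat \<Rightarrow> real \<Rightarrow> real) \<Rightarrow> (real \<times> real) set" where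
  "nu_graph_of n P = (\<Union>i\<in>{1..n}. {(x, P i x) | x. 0 \<le> x})"

definition is_nu_graph :: "nat \<Rightarrow> real list \<Rightarrow> (real \<times> real) set \<Rightarrow> bool" where
  "is_nu_graph n nu G \<longleftrightarrow> (\<exists>P. nu_system n nu P \<and> G = nu_graph_of n P)"

definition is_regular_nu_graph :: "nat \<Rightarrow> real list \<Rightarrow> (real \<times> real) set \<Rightarrow> bool" where
  "is_regular_nu_graph n nu G \<longleftrightarrow>
     is_nu_graph n nu G \<and> (\<exists>\<tau>'>1. (\<lambda>\<eta>. \<tau>' *\<^sub>R \<eta>) ` G = G)"

end

theory Submission
  imports Defs
begin


lemma affine_sub: "affine_with_slope f S s \<Longrightarrow> T \<subseteq> S \<Longrightarrow> affine_with_slope f T s"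
  unfolding affine_with_slope_def by blast

lemma affine_slope_unique:
  assumes "affine_with_slope f {c..d} s" "affine_with_slope f {c..d} s'" "c < d"
  shows "s = s'"
proof -
  obtain e where e: "\<forall>x\<in>{c..d}. f x = s * x + e" using assms(1) unfolding affine_with_slope_def by blast
  obtain e' where e': "\<forall>x\<in>{c..d}. f x = s' * x + e'" using assms(2) unfolding affine_with_slope_def by blast
  have "s * c + e = s' * c + e'" "s * d + e = s' * d + e'" using e e' assms(3) by auto
  hence "(s - s') * (d - c) = 0" by (simp add: algebra_simps)
  thus ?thesis using assms(3) by simp
qed

lemma affine_eq_or_sub1:
  assumes "affine_with_slope f {c..d} s" "affine_with_slope g {c..d} s'"
    and "x \<in> {c..d}" "y \<in> {c..d}" "x \<noteq> y" "f x = g x" "f y = g y"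
  shows "\<forall>z\<in>{c..d}. f z = g z"
proof -
  obtain e where e: "\<forall>x\<in>{c..d}. f x = s * x + e" using assms(1) unfolding affine_with_slope_def by blast
  obtain e' where e': "\<forall>x\<in>{c..d}. g x = s' * x + e'" using assms(2) unfolding affine_with_slope_def by blast
  have 1: "s * x + e = s' * x + e'" "s * y + e = s' * y + e'" using e e' assms by auto
  hence "(s - s') * (x - y) = 0" by (simp add: algebra_simps)
  hence "s = s'" using assms(5) by simp
  with 1 have "e = e'" by simp
  with `s = s'` e e' show ?thesis by auto
qed

lemma affine_cont: "affine_with_slope f {c..d} s \<Longrightarrow> continuous_on {c..d} f"
proof -
  assume "affine_with_slope f {c..d} s"
  then obtain e where e: "\<forall>x\<in>{c..d}. f x = s * x + e" unfolding affine_with_slope_def by blast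
  have "continuous_on {c..d} (\<lambda>x. s * x + e)" by (intro continuous_intros)
  thus ?thesis using continuous_on_cong e by (metis (no_types, lifting))
qed


lemma subsing_finite: assumes "\<forall>x\<in>S. \<forall>y\<in>S. x = y" shows "finite S"
proof (cases "S = {}")
  case False
  then obtain x where "x \<in> S" by auto
  hence "S = {x}" using assms by auto
  thus ?thesis by simp
qed simp

definition goodcell :: "nat \<Rightarrow> real list \<Rightarrow> (nat \<Rightarrow> real \<Rightarrow> real) \<Rightarrow> real \<Rightarrow> real \<Rightarrow> bool" where
 "goodcell n nu F c d \<longleftrightarrow> c < d \<and>
   (\<exists>sl. (\<forall>j<n. affine_with_slope (F j) {c..d} (sl j)) \<and> mset (map sl [0..<n]) = mset nu) \<and>
   (\<forall>p<n. \<forall>q<n. (\<forall>x\<in>{c..d}. F p x = F q x) \<or> (\<forall>x\<in>{c<..<d}. F p x \<noteq> F q x))"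

lemma refine:
  assumes Y: "finite Y" "a \<in> Y" "b \<in> Y" "Y \<subseteq> {a..b}"
   and gaps: "\<forall>c\<in>Y. \<forall>d\<in>Y. c<d \<longrightarrow> {c<..<d} \<inter> Y = {} \<longrightarrow> (\<exists>sl. (\<forall>j<n. affine_with_slope (F j) {c..d} (sl j)) \<and> mset (map sl [0..<n]) = mset nu)"
  shows "\<exists>Z. finite Z \<and> a \<in> Z \<and> b \<in> Z \<and> Z \<subseteq> {a..b} \<and> (\<forall>c\<in>Z. \<forall>d\<in>Z. c<d \<longrightarrow> {c<..<d} \<inter> Z = {} \<longrightarrow> goodcell n nu F c d)"
proof -
  define GP where "GP = {(c,d). c \<in> Y \<and> d \<in> Y \<and> c < d \<and> {c<..<d} \<inter> Y = {}}"
  have finGP: "finite GP"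
    by (rule finite_subset[of _ "Y \<times> Y"]) (auto simp: GP_def Y(1))
  define Cr where "Cr = (\<Union>(c,d)\<in>GP. \<Union>p\<in>{..<n}. \<Union>q\<in>{..<n}. {x\<in>{c..d}. F p x = F q x \<and> \<not>(\<forall>y\<in>{c..d}. F p y = F q y)})"
  have fin_each: "finite {x\<in>{c..d}. F p x = F q x \<and> \<not>(\<forall>y\<in>{c..d}. F p y = F q y)}"
    if hh: "(c,d) \<in> GP" "p < n" "q < n" for c d p q
  proof -
    obtain sl where sl: "\<forall>j<n. affine_with_slope (F j) {c..d} (sl j)"
      using gaps hh(1) unfolding GP_def by blast
    let ?S = "{x\<in>{c..d}. F p x = F q x \<and> \<not>(\<forall>y\<in>{c..d}. F p y = F q y)}"
    have "\<forall>x\<in>?S. \<forall>y\<in>?S. x = y"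
    proof (intro ballI)
      fix x y assume "x \<in> ?S" "y \<in> ?S"
      thus "x = y" using affine_eq_or_sub1[of "F p" c d "sl p" "F q" "sl q" x y] sl hh by auto
    qed
    thus ?thesis by (rule subsing_finite)
  qed
  have finCr: "finite Cr" unfolding Cr_def
    using finGP fin_each by (intro finite_UN_I) auto
  define Z where "Z = Y \<union> Cr"
  have CrS: "Cr \<subseteq> {a..b}"
  proof
    fix x assume "x \<in> Cr"
    then obtain c d where "(c,d) \<in> GP" "x \<in> {c..d}" unfolding Cr_def by blast
    thus "x \<in> {a..b}" using Y(4) unfolding GP_def by auto
  qed
  have "\<forall>c\<in>Z. \<forall>d\<in>Z. c<d \<longrightarrow> {c<..<d} \<inter> Z = {} \<longrightarrow> goodcell n nu F c d"
  proof (intro ballI impI)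
    fix c d assume cZ: "c \<in> Z" and dZ: "d \<in> Z" and cd: "c < d" and gap: "{c<..<d} \<inter> Z = {}"
    have ac: "a \<le> c" and db: "d \<le> b" using cZ dZ CrS Y(4) unfolding Z_def by auto
    define c0 where "c0 = Max {y\<in>Y. y \<le> c}"
    define d0 where "d0 = Min {y\<in>Y. d \<le> y}"
    have f1: "finite {y\<in>Y. y \<le> c}" "finite {y\<in>Y. d \<le> y}" using Y(1) by auto
    have ne1: "a \<in> {y\<in>Y. y \<le> c}" "b \<in> {y\<in>Y. d \<le> y}" using Y ac db by auto
    have c0: "c0 \<in> Y" "c0 \<le> c" using Max_in[OF f1(1)] ne1 unfolding c0_def by auto
    have d0: "d0 \<in> Y" "d \<le> d0" using Min_in[OF f1(2)] ne1 unfolding d0_def by auto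
    have c0max: "y \<le> c0" if "y \<in> Y" "y \<le> c" for y using Max_ge[OF f1(1)] that unfolding c0_def by auto
    have d0min: "d0 \<le> y" if "y \<in> Y" "d \<le> y" for y using Min_le[OF f1(2)] that unfolding d0_def by auto
    have gap0: "{c0<..<d0} \<inter> Y = {}"
    proof (rule ccontr)
      assume "{c0<..<d0} \<inter> Y \<noteq> {}"
      then obtain y where y: "y \<in> Y" "c0 < y" "y < d0" by auto
      show False
      proof (cases "y \<le> c")
        case True thus False using c0max[OF y(1)] y by auto
      next
        case False
        show False
        proof (cases "d \<le> y")
          case True thus False using d0min[OF y(1)] y by auto
        next
          case False
          hence "y \<in> {c<..<d} \<inter> Z" using `\<not> y \<le> c` y unfolding Z_def by auto
          thus False using gap by auto
        qed
      qed
    qed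
    have GP0: "(c0, d0) \<in> GP" unfolding GP_def using c0 d0 gap0 cd by auto
    have "c0 < d0" using c0 d0 cd by linarith
    obtain sl where sl: "\<forall>j<n. affine_with_slope (F j) {c0..d0} (sl j)" "mset (map sl [0..<n]) = mset nu"
      using gaps[rule_format, OF c0(1) d0(1) `c0 < d0` gap0] by blast
    have sub: "{c..d} \<subseteq> {c0..d0}" using c0 d0 by auto
    have "\<forall>j<n. affine_with_slope (F j) {c..d} (sl j)" using sl(1) affine_sub[OF _ sub] by blast
    moreover have "(\<forall>x\<in>{c..d}. F p x = F q x) \<or> (\<forall>x\<in>{c<..<d}. F p x \<noteq> F q x)" if "p < n" "q < n" for p q
    proof (cases "\<forall>y\<in>{c0..d0}. F p y = F q y")
      case True thus ?thesis using sub by blast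
    next
      case False
      have "F p x \<noteq> F q x" if "x \<in> {c<..<d}" for x
      proof
        assume "F p x = F q x"
        hence "x \<in> {x\<in>{c0..d0}. F p x = F q x \<and> \<not>(\<forall>y\<in>{c0..d0}. F p y = F q y)}"
          using False that sub by auto
        hence "x \<in> Cr" unfolding Cr_def using GP0 `p < n` `q < n` by blast
        thus False using gap that unfolding Z_def by auto
      qed
      thus ?thesis by blast
    qed
    ultimately show "goodcell n nu F c d" unfolding goodcell_def using cd sl(2) by blast
  qed
  moreover have "finite Z" "a \<in> Z" "b \<in> Z" "Z \<subseteq> {a..b}" using Y finCr CrS unfolding Z_def by auto
  ultimately show ?thesis by blast
qed


lemma pair_le:
  assumes g: "goodcell n nu F c d" and pq: "p < n" "q < n"
    and le0: "F p ((c+d)/2) \<le> F q ((c+d)/2)" and x: "x \<in> {c..d}"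
  shows "F p x \<le> F q x"
proof -
  define M where "M = (c+d)/2"
  have cd: "c < d" using g unfolding goodcell_def by auto
  have m: "M \<in> {c<..<d}" using cd unfolding M_def by auto
  have le: "F p M \<le> F q M" using le0 unfolding M_def .
  obtain sl where sl: "\<forall>j<n. affine_with_slope (F j) {c..d} (sl j)" using g unfolding goodcell_def by blast
  have alt: "(\<forall>x\<in>{c..d}. F p x = F q x) \<or> (\<forall>x\<in>{c<..<d}. F p x \<noteq> F q x)"
    using g pq unfolding goodcell_def by blast
  show ?thesis
  proof (cases "\<forall>x\<in>{c..d}. F p x = F q x")
    case True thus ?thesis using x by auto
  next
    case False
    hence ne: "\<forall>x\<in>{c<..<d}. F p x \<noteq> F q x" using alt by blast
    obtain e1 where e1: "\<forall>x\<in>{c..d}. F p x = sl p * x + e1" using sl pq unfolding affine_with_slope_def by blast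
    obtain e2 where e2: "\<forall>x\<in>{c..d}. F q x = sl q * x + e2" using sl pq unfolding affine_with_slope_def by blast
    define D where "D = (\<lambda>y. (sl q - sl p) * y + (e2 - e1))"
    have m': "M \<in> {c..d}" using m by auto
    have "F p M \<noteq> F q M" using ne m by blast
    hence "F p M < F q M" using le by linarith
    moreover have "F p M = sl p * M + e1" "F q M = sl q * M + e2" using e1 e2 m' by auto
    ultimately have "D M = F q M - F p M" "F p M < F q M" unfolding D_def by (simp_all add: algebra_simps)
    hence Dm: "D M > 0" by linarith
    show ?thesis
    proof (rule ccontr)
      assume "\<not> F p x \<le> F q x"
      hence Dx: "D x < 0" using x e1 e2 unfolding D_def by (auto simp: algebra_simps)
      define th where "th = D M / (D M - D x)"
      have th: "0 < th" "th < 1" using Dm Dx unfolding th_def by (auto simp: field_simps)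
      define z where "z = th * x + (1 - th) * M"
      have "D z = th * D x + (1 - th) * D M" unfolding D_def z_def by (simp add: algebra_simps)
      also have "\<dots> = 0" unfolding th_def using Dm Dx by (simp add: field_simps)
      finally have Dz: "D z = 0" .
      have "c < z" "z < d"
      proof -
        have "c \<le> x" "x \<le> d" using x by auto
        have "th * c + (1 - th) * c < th * x + (1 - th) * M"
          using th m `c \<le> x` by (intro add_le_less_mono mult_left_mono mult_strict_left_mono) auto
        thus "c < z" unfolding z_def by (simp add: algebra_simps)
        have "th * x + (1 - th) * M < th * d + (1 - th) * d"
          using th m `x \<le> d` by (intro add_le_less_mono mult_left_mono mult_strict_left_mono) auto
        thus "z < d" unfolding z_def by (simp add: algebra_simps)
      qed
      hence "F p z = F q z" using Dz e1 e2 unfolding D_def by (auto simp: algebra_simps)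
      thus False using ne `c < z` `z < d` by auto
    qed
  qed
qed

definition Pof :: "nat \<Rightarrow> (nat \<Rightarrow> real \<Rightarrow> real) \<Rightarrow> nat \<Rightarrow> real \<Rightarrow> real" where
  "Pof n F i x = sort (map (\<lambda>j. F j x) [0..<n]) ! (i - 1)"

lemma goodcell_sort:
  assumes g: "goodcell n nu F c d"
  shows "\<exists>ps. mset ps = mset [0..<n] \<and> (\<forall>x\<in>{c..d}. sort (map (\<lambda>j. F j x) [0..<n]) = map (\<lambda>j. F j x) ps)"
proof -
  let ?m = "(c+d)/2"
  define ps where "ps = sort_key (\<lambda>j. F j ?m) [0..<n]"
  have mps: "mset ps = mset [0..<n]" by (simp add: ps_def)
  have sm: "sorted (map (\<lambda>j. F j ?m) ps)" by (simp add: ps_def)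
  have setps: "set ps = {0..<n}" using mps by (metis set_mset_mset set_upt)
  have "sort (map (\<lambda>j. F j x) [0..<n]) = map (\<lambda>j. F j x) ps" if x: "x \<in> {c..d}" for x
  proof (rule properties_for_sort)
    show "mset (map (\<lambda>j. F j x) ps) = mset (map (\<lambda>j. F j x) [0..<n])" by (simp only: mset_map mps)
    show "sorted (map (\<lambda>j. F j x) ps)"
      unfolding sorted_iff_nth_mono
    proof (intro allI impI)
      fix i j assume ij: "i \<le> j" "j < length (map (\<lambda>j. F j x) ps)"
      hence ij': "i < length ps" "j < length ps" by auto
      have "F (ps!i) ?m \<le> F (ps!j) ?m" using sorted_nth_mono[OF sm, of i j] ij by auto
      moreover have "ps!i < n" "ps!j < n" using ij' setps nth_mem by fastforce+
      ultimately have "F (ps!i) x \<le> F (ps!j) x" using pair_le[OF g _ _ _ x] by blast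
      thus "map (\<lambda>j. F j x) ps ! i \<le> map (\<lambda>j. F j x) ps ! j" using ij' by simp
    qed
  qed
  thus ?thesis using mps by blast
qed

lemma good_P:
  assumes g: "goodcell n nu F c d"
  shows "\<exists>sl. (\<forall>i\<in>{1..n}. affine_with_slope (Pof n F i) {c..d} (sl i)) \<and> mset (map sl [1..<n+1]) = mset nu"
proof -
  obtain ps where ps: "mset ps = mset [0..<n]" "\<forall>x\<in>{c..d}. sort (map (\<lambda>j. F j x) [0..<n]) = map (\<lambda>j. F j x) ps"
    using goodcell_sort[OF g] by blast
  obtain sl0 where sl0: "\<forall>j<n. affine_with_slope (F j) {c..d} (sl0 j)" "mset (map sl0 [0..<n]) = mset nu"
    using g unfolding goodcell_def by blast
  have lps: "length ps = n" using ps(1) by (metis length_upt mset_eq_length minus_nat.diff_0)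
  have setps: "set ps = {0..<n}" using ps(1) by (metis set_mset_mset set_upt)
  define sl where "sl = (\<lambda>i. sl0 (ps ! (i - 1)))"
  have "affine_with_slope (Pof n F i) {c..d} (sl i)" if i: "i \<in> {1..n}" for i
  proof -
    have lt: "ps ! (i - 1) < n" using i lps setps nth_mem by fastforce
    obtain e where e: "\<forall>x\<in>{c..d}. F (ps ! (i-1)) x = sl0 (ps ! (i-1)) * x + e"
      using sl0(1) lt unfolding affine_with_slope_def by blast
    have "\<forall>x\<in>{c..d}. Pof n F i x = F (ps ! (i-1)) x"
      using ps(2) i lps unfolding Pof_def by auto
    thus ?thesis unfolding affine_with_slope_def sl_def using e by auto
  qed
  moreover have "map sl [1..<n+1] = map sl0 ps"
  proof -
    have "[1..<n+1] = map Suc [0..<n]" by (simp add: map_Suc_upt)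
    hence "map sl [1..<n+1] = map (\<lambda>i. sl0 (ps ! i)) [0..<n]" unfolding sl_def by simp
    also have "\<dots> = map sl0 (map (nth ps) [0..<length ps])" using lps by simp
    also have "\<dots> = map sl0 ps" by (simp add: map_nth)
    finally show ?thesis .
  qed
  moreover have "mset (map sl0 ps) = mset nu" using ps(1) sl0(2) by (simp only: mset_map)
  ultimately show ?thesis by metis
qed

lemma Pmem: "i \<in> {1..n} \<Longrightarrow> Pof n F i x \<in> (\<lambda>j. F j x) ` {0..<n}"
proof -
  assume i: "i \<in> {1..n}"
  have "Pof n F i x \<in> set (sort (map (\<lambda>j. F j x) [0..<n]))"
    unfolding Pof_def using i by (intro nth_mem) auto
  thus ?thesis by simp
qed


lemma gap_helper: fixes c d :: real assumes "\<And>z. z \<in> Z \<Longrightarrow> z \<le> c \<or> d \<le> z" shows "{c<..<d} \<inter> Z = {}"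
proof (rule equals0I)
  fix z assume "z \<in> {c<..<d} \<inter> Z"
  hence "c < z" "z < d" "z \<in> Z" by auto
  thus False using assms[of z] by force
qed

lemma good_cont: "goodcell n nu F c d \<Longrightarrow> i \<in> {1..n} \<Longrightarrow> continuous_on {c..d} (Pof n F i)"
  using good_P affine_cont by metis

lemma generic:
  fixes n :: nat and nu :: "real list" and F :: "nat \<Rightarrow> real \<Rightarrow> real" and K :: real
  assumes F0: "\<forall>j<n. F j 0 = 0"
    and bound: "\<forall>j<n. \<forall>x>0. \<bar>F j x\<bar> \<le> K * x"
    and cells: "\<forall>a b. 0 < a \<longrightarrow> a < b \<longrightarrow> (\<exists>Y. finite Y \<and> a \<in> Y \<and> b \<in> Y \<and> Y \<subseteq> {a..b} \<and>
        (\<forall>c\<in>Y. \<forall>d\<in>Y. c<d \<longrightarrow> {c<..<d} \<inter> Y = {} \<longrightarrow>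
          (\<exists>sl. (\<forall>j<n. affine_with_slope (F j) {c..d} (sl j)) \<and> mset (map sl [0..<n]) = mset nu)))"
  shows "nu_system n nu (Pof n F)"
proof -
  let ?P = "Pof n F"
  have partZ: "\<exists>Z. finite Z \<and> a \<in> Z \<and> b \<in> Z \<and> Z \<subseteq> {a..b} \<and> (\<forall>c\<in>Z. \<forall>d\<in>Z. c<d \<longrightarrow> {c<..<d} \<inter> Z = {} \<longrightarrow> goodcell n nu F c d)"
    if ab: "0 < a" "a < b" for a b
  proof -
    obtain Y where "finite Y" "a \<in> Y" "b \<in> Y" "Y \<subseteq> {a..b}"
        "\<forall>c\<in>Y. \<forall>d\<in>Y. c<d \<longrightarrow> {c<..<d} \<inter> Y = {} \<longrightarrow>
          (\<exists>sl. (\<forall>j<n. affine_with_slope (F j) {c..d} (sl j)) \<and> mset (map sl [0..<n]) = mset nu)"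
      using cells[rule_format, OF ab] by (elim exE conjE) blast
    thus ?thesis by (rule refine)
  qed
  have firstcell: "\<exists>e. a < e \<and> e \<le> b \<and> goodcell n nu F a e" if ab: "0 < a" "a < b" for a b
  proof -
    obtain Z where Z: "finite Z" "a \<in> Z" "b \<in> Z" "Z \<subseteq> {a..b}" "\<forall>c\<in>Z. \<forall>d\<in>Z. c<d \<longrightarrow> {c<..<d} \<inter> Z = {} \<longrightarrow> goodcell n nu F c d"
      using partZ[OF ab] by blast
    define e where "e = Min {z\<in>Z. a < z}"
    have f: "finite {z\<in>Z. a < z}" using Z by auto
    have ne: "b \<in> {z\<in>Z. a < z}" using Z ab by auto
    have e: "e \<in> Z" "a < e" using Min_in[OF f] ne unfolding e_def by auto
    have emin: "e \<le> z" if "z \<in> Z" "a < z" for z using Min_le[OF f] that unfolding e_def by auto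
    have "{a<..<e} \<inter> Z = {}" by (rule gap_helper) (use emin in \<open>meson not_le\<close>)
    hence "goodcell n nu F a e" using Z(5) Z(2) e by blast
    moreover have "e \<le> b" using e Z(4) by auto
    ultimately show ?thesis using e by blast
  qed
  have isc: "isCont (?P i) x" if x: "x > 0" and i: "i \<in> {1..n}" for x i
  proof -
    have xx: "0 < x/2" "x/2 < 2*x" using x by auto
    obtain Z where Z: "finite Z" "x/2 \<in> Z" "2*x \<in> Z" "Z \<subseteq> {x/2..2*x}" "\<forall>c\<in>Z. \<forall>d\<in>Z. c<d \<longrightarrow> {c<..<d} \<inter> Z = {} \<longrightarrow> goodcell n nu F c d"
      using partZ[OF xx] by blast
    define c where "c = Max {z\<in>Z. z < x}"
    define d where "d = Min {z\<in>Z. x < z}"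
    have f: "finite {z\<in>Z. z < x}" "finite {z\<in>Z. x < z}" using Z by auto
    have ne: "x/2 \<in> {z\<in>Z. z < x}" "2*x \<in> {z\<in>Z. x < z}" using Z x by auto
    have ne': "{z\<in>Z. z < x} \<noteq> {}" "{z\<in>Z. x < z} \<noteq> {}" using ne by blast+
    have c: "c \<in> Z" "c < x" using Max_in[OF f(1) ne'(1)] unfolding c_def by auto
    have d: "d \<in> Z" "x < d" using Min_in[OF f(2) ne'(2)] unfolding d_def by auto
    have cmax: "z \<le> c" if "z \<in> Z" "z < x" for z using Max_ge[OF f(1)] that unfolding c_def by auto
    have dmin: "d \<le> z" if "z \<in> Z" "x < z" for z using Min_le[OF f(2)] that unfolding d_def by auto
    have cont: "continuous_on {c..x} (?P i) \<and> continuous_on {x..d} (?P i)"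
    proof (cases "x \<in> Z")
      case True
      have h1: "z \<le> c \<or> x \<le> z" if zz: "z \<in> Z" for z
      proof (cases "z < x")
        case True thus ?thesis using cmax[OF zz True] by simp
      qed simp
      have h2: "z \<le> x \<or> d \<le> z" if zz: "z \<in> Z" for z
      proof (cases "x < z")
        case True thus ?thesis using dmin[OF zz True] by simp
      qed simp
      have g1: "{c<..<x} \<inter> Z = {}" by (rule gap_helper) (rule h1)
      have g2: "{x<..<d} \<inter> Z = {}" by (rule gap_helper) (rule h2)
      have "goodcell n nu F c x" "goodcell n nu F x d"
        using Z(5)[rule_format, OF c(1) True c(2) g1] Z(5)[rule_format, OF True d(1) d(2) g2] by blast+
      thus ?thesis using good_cont[OF _ i] by blast
    next
      case False
      have "{c<..<d} \<inter> Z = {}"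
      proof (rule ccontr)
        assume "{c<..<d} \<inter> Z \<noteq> {}"
        then obtain z where z: "z \<in> Z" "c < z" "z < d" by auto
        show False
        proof (cases "z < x")
          case True thus False using cmax[OF z(1)] z by auto
        next
          case False
          hence "x < z" using `x \<notin> Z` z(1) by (cases "z = x") auto
          thus False using dmin[OF z(1)] z by auto
        qed
      qed
      have "c < d" using c d by linarith
      hence "goodcell n nu F c d" using Z(5)[rule_format, OF c(1) d(1)] `{c<..<d} \<inter> Z = {}` by blast
      hence "continuous_on {c..d} (?P i)" using good_cont[OF _ i] by blast
      moreover have "{c..x} \<subseteq> {c..d}" "{x..d} \<subseteq> {c..d}" using c d by auto
      ultimately show ?thesis using continuous_on_subset by blast
    qed
    hence "continuous_on ({c..x} \<union> {x..d}) (?P i)" by (intro continuous_on_closed_Un) auto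
    moreover have "{c..x} \<union> {x..d} = {c..d}" using c d by auto
    ultimately have "continuous_on {c..d} (?P i)" by simp
    moreover have "x \<in> interior {c..d}" using c d by simp
    ultimately show ?thesis using continuous_on_interior by blast
  qed
  have Pbound: "\<bar>?P i x\<bar> \<le> K * x" if xi: "x > 0" "i \<in> {1..n}" for i x
  proof -
    obtain j where "j \<in> {0..<n}" "?P i x = F j x" using Pmem[OF xi(2), of F x] by blast
    thus ?thesis using bound xi by auto
  qed
  have P0: "?P i 0 = 0" if i0: "i \<in> {1..n}" for i
  proof -
    obtain j where "j \<in> {0..<n}" "?P i 0 = F j 0" using Pmem[OF i0, of F 0] by blast
    thus ?thesis using F0 by auto
  qed
  have c1: "continuous_on {0..} (?P i)" if i: "i \<in> {1..n}" for i
    unfolding continuous_on_eq_continuous_within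
  proof
    fix x :: real assume "x \<in> {0..}"
    show "continuous (at x within {0..}) (?P i)"
    proof (cases "x = 0")
      case False
      hence "x > 0" using `x \<in> {0..}` by auto
      thus ?thesis using isc i continuous_at_imp_continuous_within by blast
    next
      case True
      show ?thesis unfolding True continuous_within_eps_delta
      proof (intro allI impI)
        fix e :: real assume e: "e > 0"
        define K' where "K' = \<bar>K\<bar> + 1"
        have K': "K' > 0" unfolding K'_def by simp
        show "\<exists>d>0. \<forall>x'\<in>{0..}. dist x' 0 < d \<longrightarrow> dist (?P i x') (?P i 0) < e"
        proof (intro exI[of _ "e / K'"] conjI ballI impI)
          show "e / K' > 0" using e K' by simp
          fix x' :: real assume x': "x' \<in> {0..}" "dist x' 0 < e / K'"
          show "dist (?P i x') (?P i 0) < e"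
          proof (cases "x' = 0")
            case True thus ?thesis using e by simp
          next
            case False
            hence xp: "x' > 0" using x' by auto
            have "\<bar>?P i x'\<bar> \<le> K * x'" using Pbound xp i by blast
            also have "\<dots> \<le> K' * x'" unfolding K'_def using xp by (intro mult_right_mono) auto
            also have "\<dots> < K' * (e / K')" using x' xp K' by (intro mult_strict_left_mono) (auto simp: dist_real_def)
            also have "\<dots> = e" using K' by simp
            finally show ?thesis using P0[OF i] by (simp add: dist_real_def)
          qed
        qed
      qed
    qed
  qed
  have c2: "\<forall>i\<in>{1..<n}. \<forall>x\<ge>0. ?P i x \<le> ?P (Suc i) x"
  proof (intro ballI allI impI)
    fix i x assume i: "i \<in> {1..<n}" and "(x::real) \<ge> 0"
    have "sort (map (\<lambda>j. F j x) [0..<n]) ! (i - 1) \<le> sort (map (\<lambda>j. F j x) [0..<n]) ! (Suc i - 1)"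
      by (rule sorted_nth_mono) (use i in auto)
    thus "?P i x \<le> ?P (Suc i) x" unfolding Pof_def .
  qed
  have c4: "\<forall>a b. 0 < a \<longrightarrow> a < b \<longrightarrow>
        (\<exists>X. finite X \<and> a \<in> X \<and> b \<in> X \<and> X \<subseteq> {a..b} \<and>
           (\<forall>c\<in>X. \<forall>d\<in>X. c < d \<longrightarrow> {c<..<d} \<inter> X = {} \<longrightarrow>
              (\<forall>i\<in>{1..n}. \<exists>s. affine_with_slope (?P i) {c..d} s)))"
  proof (intro allI impI)
    fix a b :: real assume ab: "0 < a" "a < b"
    obtain Z where Z: "finite Z" "a \<in> Z" "b \<in> Z" "Z \<subseteq> {a..b}" "\<forall>c\<in>Z. \<forall>d\<in>Z. c<d \<longrightarrow> {c<..<d} \<inter> Z = {} \<longrightarrow> goodcell n nu F c d"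
      using partZ[OF ab] by blast
    have "\<forall>c\<in>Z. \<forall>d\<in>Z. c < d \<longrightarrow> {c<..<d} \<inter> Z = {} \<longrightarrow> (\<forall>i\<in>{1..n}. \<exists>s. affine_with_slope (?P i) {c..d} s)"
    proof (intro ballI impI)
      fix c d i assume "c \<in> Z" "d \<in> Z" "c < d" "{c<..<d} \<inter> Z = {}" "i \<in> {1..n}"
      hence "goodcell n nu F c d" using Z(5) by blast
      then obtain sl where "\<forall>i\<in>{1..n}. affine_with_slope (?P i) {c..d} (sl i)" using good_P by blast
      thus "\<exists>s. affine_with_slope (?P i) {c..d} s" using `i \<in> {1..n}` by blast
    qed
    thus "\<exists>X. finite X \<and> a \<in> X \<and> b \<in> X \<and> X \<subseteq> {a..b} \<and>
           (\<forall>c\<in>X. \<forall>d\<in>X. c < d \<longrightarrow> {c<..<d} \<inter> X = {} \<longrightarrow>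
              (\<forall>i\<in>{1..n}. \<exists>s. affine_with_slope (?P i) {c..d} s))" using Z by blast
  qed
  have sub_cell: "\<exists>a e. 0 < a \<and> a < e \<and> {a..e} \<subseteq> {c..d} \<and> goodcell n nu F a e" if "0 \<le> c" "c < d" for c d
  proof -
    have "0 < (c+d)/2" "(c+d)/2 < d" using that by auto
    then obtain e where "(c+d)/2 < e" "e \<le> d" "goodcell n nu F ((c+d)/2) e" using firstcell[of "(c+d)/2" d] by blast
    moreover have "{(c+d)/2..e} \<subseteq> {c..d}" using that `e \<le> d` by auto
    ultimately show ?thesis using `0 < (c+d)/2` by blast
  qed
  have c5: "\<forall>i\<in>{1..n}. \<forall>c d s. 0 \<le> c \<longrightarrow> c < d \<longrightarrow> affine_with_slope (?P i) {c..d} s \<longrightarrow> s \<in> set nu"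
  proof (intro ballI allI impI)
    fix i c d s assume i: "i \<in> {1..n}" and cd: "0 \<le> c" "c < d" and af: "affine_with_slope (?P i) {c..d} s"
    obtain a e where ae: "0 < a" "a < e" "{a..e} \<subseteq> {c..d}" "goodcell n nu F a e" using sub_cell[OF cd] by blast
    obtain sl where sl: "\<forall>i\<in>{1..n}. affine_with_slope (?P i) {a..e} (sl i)" "mset (map sl [1..<n+1]) = mset nu"
      using good_P[OF ae(4)] by blast
    have "s = sl i" using affine_slope_unique[OF affine_sub[OF af ae(3)] _ ae(2)] sl(1) i by blast
    moreover have "sl i \<in> set (map sl [1..<n+1])"
    proof -
      have "i \<in> set [1..<n+1]" using i by auto
      thus ?thesis by (simp only: set_map) (rule imageI)
    qed
    ultimately show "s \<in> set nu" using sl(2) by (metis set_mset_mset)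
  qed
  have c6: "\<forall>c d. 0 \<le> c \<longrightarrow> c < d \<longrightarrow> (\<forall>i\<in>{1..n}. \<exists>s. affine_with_slope (?P i) {c..d} s) \<longrightarrow>
        (\<exists>s::nat \<Rightarrow> real. (\<forall>i\<in>{1..n}. affine_with_slope (?P i) {c..d} (s i)) \<and>
            mset (map s [1..<n+1]) = mset nu)"
  proof (intro allI impI)
    fix c d assume cd: "0 \<le> c" "c < d" and af: "\<forall>i\<in>{1..n}. \<exists>s. affine_with_slope (?P i) {c..d} s"
    obtain S where S: "\<forall>i\<in>{1..n}. affine_with_slope (?P i) {c..d} (S i)" using bchoice[OF af] by blast
    obtain a e where ae: "0 < a" "a < e" "{a..e} \<subseteq> {c..d}" "goodcell n nu F a e" using sub_cell[OF cd] by blast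
    obtain sl where sl: "\<forall>i\<in>{1..n}. affine_with_slope (?P i) {a..e} (sl i)" "mset (map sl [1..<n+1]) = mset nu"
      using good_P[OF ae(4)] by blast
    have "S i = sl i" if "i \<in> {1..n}" for i
      using affine_slope_unique[OF affine_sub[OF S[rule_format, OF that] ae(3)] _ ae(2)] sl(1) that by blast
    hence eqm: "map S [1..<n+1] = map sl [1..<n+1]" by (intro map_cong) auto
    have "mset (map S [1..<n+1]) = mset nu" unfolding eqm by (rule sl(2))
    thus "\<exists>s::nat \<Rightarrow> real. (\<forall>i\<in>{1..n}. affine_with_slope (?P i) {c..d} (s i)) \<and>
            mset (map s [1..<n+1]) = mset nu" using S by blast
  qed
  show ?thesis unfolding nu_system_def
  proof (intro conjI)
    show "\<forall>i\<in>{1..n}. continuous_on {0..} (?P i)" using c1 by blast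
    show "\<forall>i\<in>{1..n}. ?P i 0 = 0" using P0 by blast
  qed (fact c2 c4 c5 c6)+
qed

lemma generic_graph:
  "nu_graph_of n (Pof n F) = (\<Union>j\<in>{0..<n}. {(x, F j x) | x. 0 \<le> x})"
proof -
  have pw: "(\<lambda>i. Pof n F i x) ` {1..n} = (\<lambda>j. F j x) ` {0..<n}" for x
  proof -
    let ?L = "sort (map (\<lambda>j. F j x) [0..<n])"
    have "{1..n} = Suc ` {0..<n}" by (auto simp: image_Suc_atLeastLessThan)
    hence "(\<lambda>i. Pof n F i x) ` {1..n} = (\<lambda>j. ?L ! j) ` {0..<n}" unfolding Pof_def by (simp only: image_image) simp
    also have "\<dots> = set ?L" by (auto simp: set_conv_nth)
    also have "\<dots> = (\<lambda>j. F j x) ` {0..<n}" by simp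
    finally show ?thesis .
  qed
  show ?thesis
  proof (rule set_eqI)
    fix p :: "real \<times> real"
    obtain x y where p: "p = (x, y)" by (cases p)
    have "p \<in> nu_graph_of n (Pof n F) \<longleftrightarrow> 0 \<le> x \<and> y \<in> (\<lambda>i. Pof n F i x) ` {1..n}"
      unfolding nu_graph_of_def p by auto
    also have "\<dots> \<longleftrightarrow> 0 \<le> x \<and> y \<in> (\<lambda>j. F j x) ` {0..<n}" using pw by simp
    also have "\<dots> \<longleftrightarrow> p \<in> (\<Union>j\<in>{0..<n}. {(x, F j x) | x. 0 \<le> x})" unfolding p by auto
    finally show "p \<in> nu_graph_of n (Pof n F) \<longleftrightarrow> p \<in> (\<Union>j\<in>{0..<n}. {(x, F j x) | x. 0 \<le> x})" .
  qed
qed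




locale sys =
  fixes k :: nat and rho :: "nat \<Rightarrow> real"
  assumes kpos: "k > 0" and rho_gt: "\<forall>i\<in>{1..k}. rho i > 1"
begin

abbreviation "tau \<equiv> tau_of k rho"
abbreviation "sig \<equiv> sigma_of k rho"

lemma prod_ge1: "h \<le> k \<Longrightarrow> (\<Prod>i\<in>{1..h}. rho i) \<ge> 1"
  using rho_gt by (intro prod_ge_1) (auto intro: less_imp_le)

lemma tau_split: "tau = (\<Prod>i\<in>{1..k-1}. rho i) * rho k"
proof -
  have "k = Suc (k - 1)" using kpos by simp
  hence "{1..k} = insert k {1..k-1}" by auto
  moreover have "k \<notin> {1..k-1}" by auto
  ultimately show ?thesis unfolding tau_of_def by (simp add: mult.commute)
qed

lemma tau_gt1: "tau > 1"
proof -
  have "(\<Prod>i\<in>{1..k-1}. rho i) \<ge> 1" by (rule prod_ge1) simp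
  moreover have "rho k > 1" using rho_gt kpos by auto
  ultimately show ?thesis unfolding tau_split by (metis less_1_mult less_le_trans mult.commute mult_less_cancel_right1 not_less_iff_gr_or_eq zero_less_one)
qed

lemma tau_pos: "tau > 0" using tau_gt1 by simp

lemma sigma_pos: "sig s > 0"
proof -
  have "nat (s mod int k) \<le> k" using kpos by (simp add: nat_le_iff)
    (meson less_imp_le pos_mod_bound of_nat_0_less_iff)
  hence "(\<Prod>i\<in>{1..nat (s mod int k)}. rho i) \<ge> 1" by (rule prod_ge1)
  thus ?thesis unfolding sigma_of_def using tau_pos by (simp add: zero_less_power_int)
qed

lemma sigma_add: "sig (r + t * int k) = tau powi t * sig r"
proof -
  have k0: "int k \<noteq> 0" using kpos by simp
  have "(r + t * int k) div int k = t + r div int k" using k0 by simp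
  moreover have "(r + t * int k) mod int k = r mod int k" by simp
  ultimately show ?thesis unfolding sigma_of_def using tau_pos
    by (simp add: power_int_add mult.assoc)
qed

lemma sigma_0: "sig 0 = 1" unfolding sigma_of_def by simp

lemma sigma_qk: "sig (q * int k) = tau powi q"
  using sigma_add[of 0 q] sigma_0 by simp

lemma sigma_step_base:
  assumes "0 \<le> h" "h < int k"
  shows "sig h < sig (h + 1)"
proof (cases "h + 1 < int k")
  case True
  have e1: "sig h = (\<Prod>i\<in>{1..nat h}. rho i)" unfolding sigma_of_def using assms by simp
  have e2: "sig (h+1) = (\<Prod>i\<in>{1..Suc (nat h)}. rho i)" unfolding sigma_of_def using assms True
    by (simp add: nat_add_distrib)
  have "(\<Prod>i\<in>{1..nat h}. rho i) \<ge> 1" using assms by (intro prod_ge1) simp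
  moreover have "Suc (nat h) \<in> {1..k}" using True assms by auto
  hence "rho (Suc (nat h)) > 1" using rho_gt by blast
  ultimately show ?thesis unfolding e1 e2 by (simp add: less_1_mult)
next
  case False
  hence hk: "h + 1 = 0 + 1 * int k" using assms by simp
  have "sig (h+1) = tau" unfolding hk sigma_add using sigma_0 by simp
  moreover have "nat h = k - 1" using assms False by linarith
  hence "sig h = (\<Prod>i\<in>{1..k-1}. rho i)" unfolding sigma_of_def using assms by simp
  moreover have "(\<Prod>i\<in>{1..k-1}. rho i) \<ge> 1" by (rule prod_ge1) simp
  moreover have "rho k > 1" using rho_gt kpos by auto
  ultimately show ?thesis unfolding tau_split by (simp add: less_1_mult)
qed

lemma sigma_succ: "sig s < sig (s + 1)"
proof -
  define h where "h = s mod int k"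
  define q where "q = s div int k"
  have s: "s = h + q * int k" unfolding h_def q_def by simp
  have s1: "s + 1 = (h + 1) + q * int k" using s by simp
  have h: "0 \<le> h" "h < int k" unfolding h_def using kpos by auto
  have "sig h < sig (h+1)" by (rule sigma_step_base[OF h])
  hence "tau powi q * sig h < tau powi q * sig (h+1)" using tau_pos by (simp add: zero_less_power_int)
  thus ?thesis by (subst s, subst s1) (simp only: sigma_add)
qed

lemma sigma_strict_aux: "sig a < sig (a + 1 + int d)"
proof (induction d)
  case 0 thus ?case using sigma_succ by simp
next
  case (Suc d)
  have "sig (a + 1 + int d) < sig (a + 1 + int d + 1)" by (rule sigma_succ)
  thus ?case using Suc by (simp add: add.assoc)
qed

lemma sigma_strict: "a < b \<Longrightarrow> sig a < sig b"
proof -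
  assume "a < b"
  then obtain d where "b = a + 1 + int d" by (metis add.commute add_diff_cancel_left' int_one_le_iff_zero_less less_imp_le zle_iff_zadd zless_imp_add1_zle diff_add_cancel)
  thus ?thesis using sigma_strict_aux by simp
qed

lemma sigma_less_iff: "sig a < sig b \<longleftrightarrow> a < b"
  using sigma_strict by (metis less_asym' linorder_neqE_linordered_idom order_less_irrefl)

lemma sigma_le_iff: "sig a \<le> sig b \<longleftrightarrow> a \<le> b"
  using sigma_less_iff by (meson not_less)

lemma sigma_below: "x > 0 \<Longrightarrow> \<exists>a. sig a < x"
proof -
  assume x: "x > 0"
  obtain N where N: "1 / x < tau ^ N" using real_arch_pow[OF tau_gt1] by blast
  have "sig ((- int N) * int k) = inverse (tau ^ N)" unfolding sigma_qk by (simp add: power_int_minus)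
  also have "\<dots> < x" using N x tau_pos by (simp add: field_simps)
  finally show ?thesis by blast
qed

lemma sigma_above: "\<exists>b. x < sig b"
proof -
  obtain N where N: "x < tau ^ N" using real_arch_pow[OF tau_gt1] by blast
  have "sig (int N * int k) = tau ^ N" unfolding sigma_qk by simp
  thus ?thesis using N by metis
qed

lemma idx_aux: "sig a \<le> x \<Longrightarrow> x < sig (a + int d) \<Longrightarrow> \<exists>s. sig s \<le> x \<and> x < sig (s + 1)"
proof (induction d)
  case 0 thus ?case by simp
next
  case (Suc d)
  show ?case
  proof (cases "x < sig (a + int d)")
    case True thus ?thesis using Suc by blast
  next
    case False
    moreover have "a + int (Suc d) = a + int d + 1" by simp
    ultimately show ?thesis using Suc(3) by (intro exI[of _ "a + int d"]) (simp only:, simp)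
  qed
qed

lemma idx_ex: "x > 0 \<Longrightarrow> \<exists>s. sig s \<le> x \<and> x < sig (s + 1)"
proof -
  assume x: "x > 0"
  obtain a where a: "sig a < x" using sigma_below[OF x] by blast
  obtain b where b: "x < sig b" using sigma_above by blast
  have "a < b" using a b sigma_less_iff by (meson less_trans)
  then obtain d where "b = a + int d" by (metis le_less zle_iff_zadd)
  thus ?thesis using idx_aux[of a x d] a b by simp
qed

lemma idx_unique: "sig s \<le> x \<Longrightarrow> x < sig (s+1) \<Longrightarrow> sig t \<le> x \<Longrightarrow> x < sig (t+1) \<Longrightarrow> s = t"
  by (metis linorder_neqE_linordered_idom order_le_less_trans sigma_le_iff zless_imp_add1_zle not_le)

definition idx :: "real \<Rightarrow> int" where "idx x = (THE s. sig s \<le> x \<and> x < sig (s + 1))"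

lemma idx_eq: "sig s \<le> x \<Longrightarrow> x < sig (s+1) \<Longrightarrow> idx x = s"
  unfolding idx_def by (rule the_equality) (auto intro: idx_unique)

lemma idx: "x > 0 \<Longrightarrow> sig (idx x) \<le> x \<and> x < sig (idx x + 1)"
  using idx_ex idx_eq by metis

lemma per_add: "per k w (r + t * int k) = per k w r"
  unfolding per_def by simp

end



lemma cyc_periodic:
  assumes "0 < l" "l dvd k"
  shows "cyc l f (x + t * int k) = cyc l f x"
proof -
  obtain c where k: "k = l * c" using assms(2) by blast
  have "x + t * int k - 1 = (x - 1) + (t * int c) * int l" unfolding k by (simp add: algebra_simps)
  hence "(x + t * int k - 1) mod int l = (x - 1) mod int l" by (simp only: mod_mult_self1)
  thus ?thesis unfolding cyc_def by simp
qed

lemma slope_pts: "slope (a *\<^sub>R (1, x)) (b *\<^sub>R (1, y)) = (b * y - a * x) / (b - a)"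
  by (simp add: slope_def)

locale sys2 = sys +
  fixes l m :: nat and alpha beta :: "nat \<Rightarrow> real"
  assumes lpos: "l > 0" and mpos: "m > 0" and klcm: "k = lcm l m"
begin

abbreviation "al \<equiv> cyc l alpha"
abbreviation "be \<equiv> cyc m beta"

lemma ldvd: "l dvd k" and mdvd: "m dvd k" using klcm by auto

lemma al_per: "al (x + t * int k) = al x" using cyc_periodic[OF lpos ldvd] .
lemma be_per: "be (x + t * int k) = be x" using cyc_periodic[OF mpos mdvd] .

definition EA :: "real list \<Rightarrow> real list \<Rightarrow> int \<Rightarrow> bool" where
  "EA u v s \<longleftrightarrow> sig (s + int l) * per k v (s + int l) - sig s * per k u s = al (s+1) * (sig (s + int l) - sig s)"
definition EB :: "real list \<Rightarrow> real list \<Rightarrow> int \<Rightarrow> bool" where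
  "EB u v s \<longleftrightarrow> sig (s + int m) * per k u (s + int m) - sig s * per k v s = - be (s+1) * (sig (s + int m) - sig s)"

lemma pt_eq: "pt k rho w r t = sig (r + t * int k) *\<^sub>R (1, per k w (r + t * int k))"
  unfolding pt_def sigma_add per_add ..

lemma slopeA_iff:
  "slope (pt k rho u r t) (pt k rho v (r + int l) t) = al (r+1) \<longleftrightarrow> EA u v (r + t * int k)"
proof -
  let ?s = "r + t * int k"
  have e: "r + int l + t * int k = ?s + int l" by simp
  have d: "sig (?s + int l) - sig ?s > 0" using sigma_strict[of ?s "?s + int l"] lpos by simp
  have a: "al (r + 1) = al (?s + 1)" using al_per[of "r+1" t] by (simp add: algebra_simps)
  show ?thesis unfolding pt_eq e slope_pts EA_def a using d
    by (simp add: divide_eq_eq)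
qed

lemma slopeB_iff:
  "slope (pt k rho v r t) (pt k rho u (r + int m) t) = - be (r+1) \<longleftrightarrow> EB u v (r + t * int k)"
proof -
  let ?s = "r + t * int k"
  have e: "r + int m + t * int k = ?s + int m" by simp
  have d: "sig (?s + int m) - sig ?s > 0" using sigma_strict[of ?s "?s + int m"] mpos by simp
  have a: "be (r + 1) = be (?s + 1)" using be_per[of "r+1" t] by (simp add: algebra_simps)
  show ?thesis unfolding pt_eq e slope_pts EB_def a using d
    by (simp add: divide_eq_eq)
qed

lemma slopes_equiv:
  "(\<forall>r\<in>{0..<int k}. \<forall>t::int.
      slope (pt k rho u r t) (pt k rho v (r + int l) t) = al (r + 1) \<and>
      slope (pt k rho v r t) (pt k rho u (r + int m) t) = - be (r + 1))
   \<longleftrightarrow> (\<forall>s. EA u v s \<and> EB u v s)"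
proof
  assume H: "\<forall>r\<in>{0..<int k}. \<forall>t::int.
      slope (pt k rho u r t) (pt k rho v (r + int l) t) = al (r + 1) \<and>
      slope (pt k rho v r t) (pt k rho u (r + int m) t) = - be (r + 1)"
  show "\<forall>s. EA u v s \<and> EB u v s"
  proof
    fix s
    have r: "s mod int k \<in> {0..<int k}" using kpos by auto
    have s: "s = s mod int k + (s div int k) * int k" by simp
    show "EA u v s \<and> EB u v s"
      using H[rule_format, OF r, of "s div int k"] slopeA_iff slopeB_iff s by metis
  qed
next
  assume "\<forall>s. EA u v s \<and> EB u v s"
  thus "\<forall>r\<in>{0..<int k}. \<forall>t::int.
      slope (pt k rho u r t) (pt k rho v (r + int l) t) = al (r + 1) \<and>
      slope (pt k rho v r t) (pt k rho u (r + int m) t) = - be (r + 1)"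
    using slopeA_iff slopeB_iff by blast
qed


abbreviation "nn \<equiv> l + m"

definition aa :: "int \<Rightarrow> real" where "aa s = al (s+1) * (sig (s + int l) - sig s)"
definition bb :: "int \<Rightarrow> real" where "bb s = - be (s+1) * (sig (s + int m) - sig s)"
definition cc :: "int \<Rightarrow> real" where "cc s = aa s + bb (s + int l)"

lemma sig_per2: "sig (s + c + t * int k) = tau powi t * sig (s + c)"
  using sigma_add[of "s + c" t] by (simp add: algebra_simps)

lemma aa_per: "aa (s + t * int k) = tau powi t * aa s"
proof -
  have "al (s + t * int k + 1) = al (s + 1)" using al_per[of "s+1" t] by (simp add: algebra_simps)
  moreover have "sig (s + t * int k + int l) = tau powi t * sig (s + int l)" using sig_per2[of s "int l" t] by (simp add: algebra_simps)
  ultimately show ?thesis unfolding aa_def sigma_add by (simp add: algebra_simps)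
qed

lemma bb_per: "bb (s + t * int k) = tau powi t * bb s"
proof -
  have "be (s + t * int k + 1) = be (s + 1)" using be_per[of "s+1" t] by (simp add: algebra_simps)
  moreover have "sig (s + t * int k + int m) = tau powi t * sig (s + int m)" using sig_per2[of s "int m" t] by (simp add: algebra_simps)
  ultimately show ?thesis unfolding bb_def sigma_add by (simp add: algebra_simps)
qed

lemma cc_per: "cc (s + t * int k) = tau powi t * cc s"
proof -
  have "bb (s + t * int k + int l) = tau powi t * bb (s + int l)"
    using bb_per[of "s + int l" t] by (simp add: algebra_simps)
  thus ?thesis unfolding cc_def aa_per by (simp add: algebra_simps)
qed

lemma tau_n: "tau ^ nn > 1" using tau_gt1 lpos by (simp add: one_less_power)

definition Xf :: "int \<Rightarrow> real" where "Xf s = (\<Sum>i<k. cc (s + int i * int nn)) / (tau ^ nn - 1)"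
definition Yf :: "int \<Rightarrow> real" where "Yf s = Xf (s - int l) + aa (s - int l)"

lemma Xf_per: "Xf (s + t * int k) = tau powi t * Xf s"
proof -
  have "(\<Sum>i<k. cc (s + t * int k + int i * int nn)) = (\<Sum>i<k. tau powi t * cc (s + int i * int nn))"
  proof (rule sum.cong)
    fix i assume "i \<in> {..<k}"
    have e: "s + t * int k + int i * int nn = (s + int i * int nn) + t * int k" by simp
    show "cc (s + t * int k + int i * int nn) = tau powi t * cc (s + int i * int nn)" unfolding e by (rule cc_per)
  qed simp
  thus ?thesis unfolding Xf_def by (simp add: sum_distrib_left)
qed

lemma Yf_per: "Yf (s + t * int k) = tau powi t * Yf s"
proof -
  have e: "s + t * int k - int l = (s - int l) + t * int k" by simp
  show ?thesis unfolding Yf_def e Xf_per aa_per by (simp add: algebra_simps)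
qed

lemma Xf_step: "Xf (s + int nn) = Xf s + cc s"
proof -
  let ?f = "\<lambda>i. cc (s + int i * int nn)"
  have S1: "(\<Sum>i<k. cc (s + int nn + int i * int nn)) = (\<Sum>i<k. ?f (Suc i))"
    by (rule sum.cong) (simp_all add: algebra_simps)
  have S2: "(\<Sum>i<Suc k. ?f i) = ?f 0 + (\<Sum>i<k. ?f (Suc i))" by (rule sum.lessThan_Suc_shift)
  have S3: "(\<Sum>i<Suc k. ?f i) = (\<Sum>i<k. ?f i) + ?f k" by (rule sum.lessThan_Suc)
  have "?f k = cc (s + int nn * int k)" by (simp add: mult.commute)
  also have "\<dots> = tau powi (int nn) * cc s" by (rule cc_per)
  also have "\<dots> = tau ^ nn * cc s" by (simp only: power_int_of_nat)
  finally have fk: "?f k = tau ^ nn * cc s" .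
  have f0: "?f 0 = cc s" by simp
  have S: "(\<Sum>i<k. cc (s + int nn + int i * int nn)) = (\<Sum>i<k. ?f i) + (tau ^ nn - 1) * cc s"
    using S1 S2 S3 fk f0 by (simp add: algebra_simps)
  have ne: "tau ^ nn - 1 \<noteq> 0" using tau_n by simp
  show ?thesis unfolding Xf_def S using ne by (simp add: field_simps)
qed

lemma int_mod_nat: "r < k \<Longrightarrow> nat (int r mod int k) = r"
  by (simp add: zmod_int)

lemma per_nth: "r < k \<Longrightarrow> per k w (int r) = w ! r"
  unfolding per_def using int_mod_nat by simp

lemma sol_X:
  assumes H: "\<forall>s. EA u v s \<and> EB u v s"
  shows "sig s * per k u s = Xf s"
proof -
  define X where "X = (\<lambda>s. sig s * per k u s)"
  define Y where "Y = (\<lambda>s. sig s * per k v s)"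
  have hA: "Y (s + int l) = X s + aa s" for s
  proof -
    have "EA u v s" using H by blast
    thus ?thesis unfolding EA_def X_def Y_def aa_def by (simp add: algebra_simps)
  qed
  have hB: "X (s + int m) = Y s + bb s" for s
  proof -
    have "EB u v s" using H by blast
    thus ?thesis unfolding EB_def X_def Y_def bb_def by (simp add: algebra_simps)
  qed
  have step: "X (s + int nn) = X s + cc s" for s
  proof -
    have "X (s + int nn) = X ((s + int l) + int m)" by (simp add: algebra_simps)
    also have "\<dots> = X s + aa s + bb (s + int l)" unfolding hB hA ..
    finally show ?thesis unfolding cc_def by simp
  qed
  have iter: "X (s + int i * int nn) = X s + (\<Sum>i'<i. cc (s + int i' * int nn))" for i
  proof (induction i)
    case 0 thus ?case by simp
  next
    case (Suc i)
    have "X (s + int (Suc i) * int nn) = X ((s + int i * int nn) + int nn)" by (simp add: algebra_simps)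
    also have "\<dots> = X (s + int i * int nn) + cc (s + int i * int nn)" by (rule step)
    finally show ?case using Suc by simp
  qed
  have perX: "X (s + t * int k) = tau powi t * X s" for t
    unfolding X_def sigma_add per_add by simp
  have "X (s + int k * int nn) = X (s + int nn * int k)" by (simp add: mult.commute)
  also have "\<dots> = tau powi (int nn) * X s" by (rule perX)
  also have "\<dots> = tau ^ nn * X s" by (simp only: power_int_of_nat)
  finally have "tau ^ nn * X s = X s + (\<Sum>i'<k. cc (s + int i' * int nn))" using iter[of k] by simp
  hence "(tau ^ nn - 1) * X s = (\<Sum>i'<k. cc (s + int i' * int nn))" by (simp add: algebra_simps)
  moreover have ne: "tau ^ nn - 1 \<noteq> 0" using tau_n by simp
  ultimately have "X s = Xf s" unfolding Xf_def by (simp add: field_simps)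
  thus ?thesis unfolding X_def .
qed

lemma sol_Y:
  assumes H: "\<forall>s. EA u v s \<and> EB u v s"
  shows "sig s * per k v s = Yf s"
proof -
  have "EA u v (s - int l)" using H by blast
  hence "sig s * per k v s = sig (s - int l) * per k u (s - int l) + aa (s - int l)"
    unfolding EA_def aa_def by (simp add: algebra_simps)
  thus ?thesis unfolding Yf_def sol_X[OF H] .
qed

definition u0 :: "real list" where "u0 = map (\<lambda>r. Xf (int r) / sig (int r)) [0..<k]"
definition v0 :: "real list" where "v0 = map (\<lambda>r. Yf (int r) / sig (int r)) [0..<k]"

lemma per_gen:
  assumes "\<And>s t. G (s + t * int k) = tau powi t * G s"
  shows "sig s * per k (map (\<lambda>r. G (int r) / sig (int r)) [0..<k]) s = G s"
proof -
  define h where "h = s mod int k"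
  define q where "q = s div int k"
  have s: "s = h + q * int k" unfolding h_def q_def by simp
  have h0: "0 \<le> h" "h < int k" unfolding h_def using kpos by auto
  have hn: "int (nat h) = h" using h0 by simp
  have nk: "nat h < k" using h0 by linarith
  have "per k (map (\<lambda>r. G (int r) / sig (int r)) [0..<k]) s = G h / sig h"
    unfolding per_def h_def[symmetric] using nk hn by simp
  moreover have "sig s = tau powi q * sig h" using s sigma_add by simp
  moreover have "G s = tau powi q * G h" using s assms by simp
  moreover have "sig h > 0" by (rule sigma_pos)
  ultimately show ?thesis by simp
qed

lemma u0_per: "sig s * per k u0 s = Xf s" unfolding u0_def by (rule per_gen) (rule Xf_per)
lemma v0_per: "sig s * per k v0 s = Yf s" unfolding v0_def by (rule per_gen) (rule Yf_per)

lemma u0v0_sol: "EA u0 v0 s \<and> EB u0 v0 s"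
proof
  have "sig (s + int l) * per k v0 (s + int l) - sig s * per k u0 s = Yf (s + int l) - Xf s"
    unfolding u0_per v0_per ..
  also have "\<dots> = aa s" unfolding Yf_def by simp
  finally show "EA u0 v0 s" unfolding EA_def aa_def .
  have "sig (s + int m) * per k u0 (s + int m) - sig s * per k v0 s = Xf (s + int m) - Yf s"
    unfolding u0_per v0_per ..
  also have "Xf (s + int m) = Xf ((s - int l) + int nn)" by (simp add: algebra_simps)
  also have "\<dots> = Xf (s - int l) + cc (s - int l)" by (rule Xf_step)
  finally have "sig (s + int m) * per k u0 (s + int m) - sig s * per k v0 s = bb s"
    unfolding Yf_def cc_def by simp
  thus "EB u0 v0 s" unfolding EB_def bb_def .
qed

lemma unique_sol:
  assumes "length u = k" "length v = k" "\<forall>s. EA u v s \<and> EB u v s"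
  shows "u = u0 \<and> v = v0"
proof
  show "u = u0"
  proof (rule nth_equalityI)
    show "length u = length u0" using assms by (simp add: u0_def)
    fix r assume "r < length u"
    hence r: "r < k" using assms by simp
    have "sig (int r) * per k u (int r) = Xf (int r)" by (rule sol_X[OF assms(3)])
    hence "u ! r = Xf (int r) / sig (int r)" using per_nth[OF r] sigma_pos[of "int r"] by (simp add: field_simps)
    thus "u ! r = u0 ! r" unfolding u0_def using r by simp
  qed
  show "v = v0"
  proof (rule nth_equalityI)
    show "length v = length v0" using assms by (simp add: v0_def)
    fix r assume "r < length v"
    hence r: "r < k" using assms by simp
    have "sig (int r) * per k v (int r) = Yf (int r)" by (rule sol_Y[OF assms(3)])
    hence "v ! r = Yf (int r) / sig (int r)" using per_nth[OF r] sigma_pos[of "int r"] by (simp add: field_simps)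
    thus "v ! r = v0 ! r" unfolding v0_def using r by simp
  qed
qed

lemma len_u0v0: "length u0 = k" "length v0 = k" unfolding u0_def v0_def by simp_all

end



lemma mod_inj:
  assumes "0 < N"
  shows "inj_on (\<lambda>ob::nat. nat ((c - int ob) mod int N)) {0..<N}"
proof
  fix o1 o2 assume ob: "o1 \<in> {0..<N}" "o2 \<in> {0..<N}"
    and eq: "nat ((c - int o1) mod int N) = nat ((c - int o2) mod int N)"
  have "(c - int o1) mod int N = (c - int o2) mod int N" using eq assms by (simp add: eq_nat_nat_iff)
  hence "int N dvd (c - int o1) - (c - int o2)" by (simp only: mod_eq_dvd_iff)
  hence d: "int N dvd int o2 - int o1" by simp
  show "o1 = o2"
  proof (rule ccontr)
    assume "o1 \<noteq> o2"
    hence "int o2 - int o1 \<noteq> 0" by simp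
    hence "\<bar>int N\<bar> \<le> \<bar>int o2 - int o1\<bar>" using d dvd_imp_le_int by blast
    thus False using ob by auto
  qed
qed

lemma mod_image:
  assumes "0 < N"
  shows "(\<lambda>ob::nat. nat ((c - int ob) mod int N)) ` {0..<N} = {0..<N}"
proof (rule endo_inj_surj)
  show "(\<lambda>ob::nat. nat ((c - int ob) mod int N)) ` {0..<N} \<subseteq> {0..<N}"
    using assms by (auto simp: nat_less_iff)
qed (use mod_inj[OF assms] in auto)

lemma mset_mod_reindex:
  assumes "0 < N"
  shows "mset (map (\<lambda>ob. g (nat ((c - int ob) mod int N))) [0..<N]) = mset (map g [0..<N])"
proof -
  have "mset (map (\<lambda>ob. g (nat ((c - int ob) mod int N))) [0..<N])
      = image_mset g (image_mset (\<lambda>ob::nat. nat ((c - int ob) mod int N)) (mset_set {0..<N}))"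
    by (simp add: image_mset.compositionality o_def)
  also have "\<dots> = image_mset g (mset_set {0..<N})"
    using image_mset_mset_set[OF mod_inj[OF assms, of c]] mod_image[OF assms, of c] by simp
  also have "\<dots> = mset (map g [0..<N])" by simp
  finally show ?thesis .
qed

lemma cyc_mset:
  assumes "0 < l"
  shows "mset (map (\<lambda>ob. cyc l f (c - int ob)) [0..<l]) = mset (map f [1..<l+1])"
proof -
  have "cyc l f (c - int ob) = (f \<circ> Suc) (nat ((c - 1 - int ob) mod int l))" for ob
    unfolding cyc_def by (simp add: algebra_simps)
  hence "mset (map (\<lambda>ob. cyc l f (c - int ob)) [0..<l]) = mset (map (\<lambda>ob. (f \<circ> Suc) (nat ((c - 1 - int ob) mod int l))) [0..<l])"
    by simp
  also have "\<dots> = mset (map (f \<circ> Suc) [0..<l])" by (rule mset_mod_reindex[OF assms])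
  also have "\<dots> = mset (map f [1..<l+1])"
  proof -
    have "[1..<l+1] = map Suc [0..<l]" by (simp add: map_Suc_upt)
    thus ?thesis by (simp only: map_map)
  qed
  finally show ?thesis .
qed

lemma seg_char:
  fixes p1 p2 q1 q2 :: real
  assumes "p1 < q1"
  shows "closed_segment (p1, p2) (q1, q2) = {(x, p2 + (q2 - p2) / (q1 - p1) * (x - p1)) | x. p1 \<le> x \<and> x \<le> q1}"
proof
  have d: "q1 - p1 > 0" using assms by simp
  show "closed_segment (p1, p2) (q1, q2) \<subseteq> {(x, p2 + (q2 - p2) / (q1 - p1) * (x - p1)) | x. p1 \<le> x \<and> x \<le> q1}"
  proof
    fix z assume "z \<in> closed_segment (p1, p2) (q1, q2)"
    then obtain t where t: "0 \<le> t" "t \<le> 1" "z = (1 - t) *\<^sub>R (p1, p2) + t *\<^sub>R (q1, q2)"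
      unfolding closed_segment_def by blast
    define x where "x = (1 - t) * p1 + t * q1"
    have z: "z = (x, (1 - t) * p2 + t * q2)" using t(3) unfolding x_def by simp
    have xe: "x = p1 + t * (q1 - p1)" unfolding x_def by (simp add: algebra_simps)
    have "0 \<le> t * (q1 - p1)" using t d by simp
    moreover have "t * (q1 - p1) \<le> q1 - p1" by (rule mult_left_le_one_le) (use t d in auto)
    ultimately have "p1 \<le> x" "x \<le> q1" using xe by linarith+
    moreover have "(1 - t) * p2 + t * q2 = p2 + (q2 - p2) / (q1 - p1) * (x - p1)"
      unfolding x_def using d by (simp add: field_simps)
    ultimately show "z \<in> {(x, p2 + (q2 - p2) / (q1 - p1) * (x - p1)) | x. p1 \<le> x \<and> x \<le> q1}"
      unfolding z by auto
  qed
  show "{(x, p2 + (q2 - p2) / (q1 - p1) * (x - p1)) | x. p1 \<le> x \<and> x \<le> q1} \<subseteq> closed_segment (p1, p2) (q1, q2)"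
  proof
    fix z assume "z \<in> {(x, p2 + (q2 - p2) / (q1 - p1) * (x - p1)) | x. p1 \<le> x \<and> x \<le> q1}"
    then obtain x where x: "p1 \<le> x" "x \<le> q1" "z = (x, p2 + (q2 - p2) / (q1 - p1) * (x - p1))" by blast
    define t where "t = (x - p1) / (q1 - p1)"
    have t: "0 \<le> t" "t \<le> 1" unfolding t_def using x d by (auto simp: field_simps)
    have e1: "t * (q1 - p1) = x - p1" unfolding t_def using d by simp
    have e2: "(1 - t) * p1 + t * q1 = x" using e1 by (simp add: algebra_simps)
    have e3: "(q2 - p2) / (q1 - p1) * (x - p1) = t * (q2 - p2)" unfolding t_def by simp
    have e4: "(1 - t) * p2 + t * q2 = p2 + (q2 - p2) / (q1 - p1) * (x - p1)" unfolding e3 by (simp add: algebra_simps)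
    have "z = ((1 - t) * p1 + t * q1, (1 - t) * p2 + t * q2)" unfolding x(3) e2 e4 ..
    hence "z = (1 - t) *\<^sub>R (p1, p2) + t *\<^sub>R (q1, q2)" by simp
    thus "z \<in> closed_segment (p1, p2) (q1, q2)" unfolding closed_segment_def using t by blast
  qed
qed

locale sol = sys2 +
  fixes u v :: "real list"
  assumes len: "length u = k" "length v = k" and solE: "\<forall>s. EA u v s \<and> EB u v s"
begin

definition LA :: "int \<Rightarrow> real \<Rightarrow> real" where "LA s x = sig s * per k u s + al (s+1) * (x - sig s)"
definition LB :: "int \<Rightarrow> real \<Rightarrow> real" where "LB s x = sig s * per k v s - be (s+1) * (x - sig s)"

lemma LA_end: "LA s (sig (s + int l)) = LB (s + int l) (sig (s + int l))"
proof -
  have "EA u v s" using solE by blast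
  thus ?thesis unfolding EA_def LA_def LB_def by (simp add: algebra_simps)
qed

lemma LB_end: "LB s (sig (s + int m)) = LA (s + int m) (sig (s + int m))"
proof -
  have "EB u v s" using solE by blast
  thus ?thesis unfolding EB_def LA_def LB_def by (simp add: algebra_simps)
qed

definition offs :: "nat \<Rightarrow> int \<Rightarrow> int" where "offs j s = (s - int j) mod int nn"

definition cline :: "nat \<Rightarrow> int \<Rightarrow> real \<Rightarrow> real" where
  "cline j s x = (if offs j s < int l then LA (s - offs j s) x else LB (s - offs j s + int l) x)"

definition cslope :: "nat \<Rightarrow> int \<Rightarrow> real" where
  "cslope j s = (if offs j s < int l then al (s - offs j s + 1) else - be (s - offs j s + int l + 1))"

lemma nn_pos: "0 < nn" using lpos by simp

lemma offs_range: "0 \<le> offs j s" "offs j s < int nn"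
  unfolding offs_def using nn_pos by auto

lemma cline_affine: "affine_with_slope (cline j s) S (cslope j s)"
proof (cases "offs j s < int l")
  case True
  define b where "b = s - offs j s"
  have "\<forall>x\<in>S. cline j s x = cslope j s * x + (sig b * per k u b - al (b + 1) * sig b)"
    unfolding cline_def cslope_def LA_def b_def[symmetric] using True by (simp add: algebra_simps)
  thus ?thesis unfolding affine_with_slope_def by blast
next
  case False
  define b where "b = s - offs j s + int l"
  have "\<forall>x\<in>S. cline j s x = cslope j s * x + (sig b * per k v b + be (b + 1) * sig b)"
    unfolding cline_def cslope_def LB_def b_def[symmetric] using False by (simp add: algebra_simps)
  thus ?thesis unfolding affine_with_slope_def by blast
qed

lemma offs_succ: "offs j (s + 1) = (if offs j s + 1 < int nn then offs j s + 1 else 0)"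
proof -
  define ob where "ob = offs j s"
  define q where "q = (s - int j) div int nn"
  have "s - int j = (s - int j) mod int nn + (s - int j) div int nn * int nn" by (rule mod_div_mult_eq[symmetric])
  hence sj: "s - int j = ob + q * int nn" unfolding ob_def q_def offs_def .
  have ob: "0 \<le> ob" "ob < int nn" unfolding ob_def using offs_range by auto
  show ?thesis
  proof (cases "ob + 1 < int nn")
    case True
    have "s + 1 - int j = (ob + 1) + q * int nn" using sj by simp
    hence "offs j (s+1) = (ob + 1) mod int nn" unfolding offs_def by (simp only: mod_mult_self1)
    also have "\<dots> = ob + 1" using True ob by simp
    finally show ?thesis using True unfolding ob_def by simp
  next
    case False
    hence "ob + 1 = int nn" using ob by simp
    hence "s + 1 - int j = 0 + (q + 1) * int nn" using sj by (simp add: algebra_simps)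
    hence "offs j (s+1) = 0" unfolding offs_def by (simp only: mod_mult_self1) simp
    thus ?thesis using False unfolding ob_def by simp
  qed
qed

lemma cell_cont: "cline j s (sig (s+1)) = cline j (s+1) (sig (s+1))"
proof -
  define ob where "ob = offs j s"
  have ob: "0 \<le> ob" "ob < int nn" unfolding ob_def using offs_range by auto
  show ?thesis
  proof (cases "ob + 1 < int nn")
    case True
    hence o1: "offs j (s+1) = ob + 1" using offs_succ unfolding ob_def by simp
    have b: "s + 1 - (ob + 1) = s - ob" by simp
    show ?thesis
    proof (cases "ob + 1 < int l")
      case True thus ?thesis unfolding cline_def o1 ob_def[symmetric] b by simp
    next
      case False
      show ?thesis
      proof (cases "ob + 1 = int l")
        case True
        have e: "s - ob + int l = s + 1" using True by simp
        have "cline j s (sig (s+1)) = LA (s - ob) (sig (s + 1))"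
          unfolding cline_def ob_def[symmetric] using True by simp
        also have "\<dots> = LB (s - ob + int l) (sig (s + 1))" using LA_end[of "s - ob"] unfolding e .
        finally have "cline j s (sig (s+1)) = LB (s - ob + int l) (sig (s + 1))" .
        thus ?thesis unfolding cline_def o1 b using True by simp
      next
        case False
        thus ?thesis unfolding cline_def o1 ob_def[symmetric] b using `\<not> ob + 1 < int l` by simp
      qed
    qed
  next
    case False
    hence o1: "offs j (s+1) = 0" using offs_succ unfolding ob_def by simp
    have on: "ob = int nn - 1" using False ob by simp
    hence ol: "\<not> ob < int l" using mpos by simp
    have e: "s + 1 = (s - ob + int l) + int m" using on by simp
    have "cline j s (sig (s+1)) = LB (s - ob + int l) (sig (s + 1))"
      unfolding cline_def ob_def[symmetric] using ol by simp
    also have "\<dots> = LA (s + 1) (sig (s+1))" using LB_end[of "s - ob + int l"] unfolding e[symmetric] .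
    also have "\<dots> = cline j (s+1) (sig (s+1))" unfolding cline_def o1 using lpos by simp
    finally show ?thesis .
  qed
qed

definition FF :: "nat \<Rightarrow> real \<Rightarrow> real" where
  "FF j x = (if x \<le> 0 then 0 else cline j (idx x) x)"

lemma FF_cell: "sig s \<le> x \<Longrightarrow> x \<le> sig (s+1) \<Longrightarrow> FF j x = cline j s x"
proof -
  assume x: "sig s \<le> x" "x \<le> sig (s+1)"
  have xp: "x > 0" using x(1) sigma_pos[of s] by linarith
  show ?thesis
  proof (cases "x < sig (s+1)")
    case True
    hence "idx x = s" using idx_eq x by blast
    thus ?thesis unfolding FF_def using xp by simp
  next
    case False
    hence xe: "x = sig (s+1)" using x by simp
    have "idx x = s + 1" using idx_eq[of "s+1" x] xe sigma_succ[of "s+1"] by simp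
    thus ?thesis unfolding FF_def using xp xe cell_cont by simp
  qed
qed

lemma FF_affine: "affine_with_slope (FF j) {sig s..sig (s+1)} (cslope j s)"
proof -
  obtain e where e: "\<forall>x\<in>{sig s..sig (s+1)}. cline j s x = cslope j s * x + e"
    using cline_affine[of j s "{sig s..sig (s+1)}"] unfolding affine_with_slope_def by blast
  show ?thesis unfolding affine_with_slope_def using e FF_cell by (intro exI[of _ e]) auto
qed

lemma FF0: "FF j 0 = 0" unfolding FF_def by simp


abbreviation "nuL \<equiv> map alpha [1..<l+1] @ map (\<lambda>j. - beta j) [1..<m+1]"

lemma cslope_mset: "mset (map (\<lambda>j. cslope j s) [0..<nn]) = mset nuL"
proof -
  define g where "g = (\<lambda>ob::nat. if int ob < int l then al (s - int ob + 1) else - be (s - int ob + int l + 1))"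
  have cg: "cslope j s = g (nat ((s - int j) mod int nn))" for j
  proof -
    have "int (nat ((s - int j) mod int nn)) = offs j s" using offs_range(1)[of j s] unfolding offs_def by simp
    thus ?thesis unfolding cslope_def g_def by simp
  qed
  have "mset (map (\<lambda>j. cslope j s) [0..<nn]) = mset (map (\<lambda>j. g (nat ((s - int j) mod int nn))) [0..<nn])"
    by (simp only: cg)
  also have "\<dots> = mset (map g [0..<nn])" by (rule mset_mod_reindex[OF nn_pos])
  finally have A0: "mset (map (\<lambda>j. cslope j s) [0..<nn]) = mset (map g [0..<nn])" .
  have "[0..<nn] = [0..<l] @ [l..<l+m]" by (rule upt_add_eq_append) simp
  moreover have "[l..<l+m] = map (\<lambda>i. i + l) [0..<m]" using map_add_upt[of l m] by (simp add: add.commute)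
  ultimately have A1: "map g [0..<nn] = map g [0..<l] @ map (\<lambda>i. g (i + l)) [0..<m]"
    by (simp only: map_append map_map o_def)
  have B0: "map g [0..<l] = map (\<lambda>ob. al (s + 1 - int ob)) [0..<l]"
  proof (rule map_cong)
    fix ob assume "ob \<in> set [0..<l]"
    hence lt: "int ob < int l" by simp
    have e: "s - int ob + 1 = s + 1 - int ob" by simp
    show "g ob = al (s + 1 - int ob)" unfolding g_def e[symmetric] using lt by simp
  qed simp
  have B: "mset (map g [0..<l]) = mset (map alpha [1..<l+1])" unfolding B0 by (rule cyc_mset[OF lpos])
  have C0: "map (\<lambda>i. g (i + l)) [0..<m] = map (uminus \<circ> (\<lambda>i. be (s + 1 - int i))) [0..<m]"
  proof (rule map_cong)
    fix i assume "i \<in> set [0..<m]"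
    have lt: "\<not> int (i + l) < int l" by simp
    have e: "s - int (i + l) + int l + 1 = s + 1 - int i" by simp
    show "g (i + l) = (uminus \<circ> (\<lambda>i. be (s + 1 - int i))) i" unfolding g_def o_def e[symmetric] using lt by simp
  qed simp
  have "mset (map (\<lambda>i. g (i + l)) [0..<m]) = image_mset uminus (mset (map (\<lambda>i. be (s + 1 - int i)) [0..<m]))"
    unfolding C0 by (simp only: map_map[symmetric] mset_map)
  also have "\<dots> = image_mset uminus (mset (map beta [1..<m+1]))" by (simp only: cyc_mset[OF mpos])
  also have "\<dots> = mset (map (\<lambda>j. - beta j) [1..<m+1])" by (simp only: mset_map image_mset.compositionality o_def)
  finally have C: "mset (map (\<lambda>i. g (i + l)) [0..<m]) = mset (map (\<lambda>j. - beta j) [1..<m+1])" .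
  show ?thesis unfolding A0 A1 mset_append B C by simp
qed

definition Mw :: real where "Mw = (\<Sum>i<k. \<bar>u ! i\<bar> + \<bar>v ! i\<bar>)"
definition Ms :: real where "Ms = (\<Sum>i=1..l. \<bar>alpha i\<bar>) + (\<Sum>j=1..m. \<bar>beta j\<bar>)"

lemma per_bound: "\<bar>per k u s\<bar> \<le> Mw \<and> \<bar>per k v s\<bar> \<le> Mw"
proof -
  define r where "r = nat (s mod int k)"
  have r: "r < k" unfolding r_def using kpos by (simp add: nat_less_iff)
  have "\<bar>u ! r\<bar> + \<bar>v ! r\<bar> \<le> Mw" unfolding Mw_def using r
    by (intro member_le_sum[of r "{..<k}" "\<lambda>i. \<bar>u ! i\<bar> + \<bar>v ! i\<bar>"]) auto
  hence "\<bar>u ! r\<bar> \<le> Mw" "\<bar>v ! r\<bar> \<le> Mw" using abs_ge_zero[of "u!r"] abs_ge_zero[of "v!r"] by linarith+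
  thus ?thesis unfolding per_def r_def[symmetric] by simp
qed

lemma cyc_bound:
  assumes "0 < L"
  shows "\<bar>cyc L f x\<bar> \<le> (\<Sum>i=1..L. \<bar>f i\<bar>)"
proof -
  have "(x - 1) mod int L < int L" "0 \<le> (x - 1) mod int L" using assms by auto
  hence "nat ((x - 1) mod int L) < L" by (simp add: nat_less_iff)
  hence "nat ((x - 1) mod int L) + 1 \<in> {1..L}" by simp
  thus ?thesis unfolding cyc_def by (intro member_le_sum) auto
qed

lemma al_bound: "\<bar>al x\<bar> \<le> Ms"
proof -
  have "0 \<le> (\<Sum>j=1..m. \<bar>beta j\<bar>)" by (rule sum_nonneg) simp
  thus ?thesis using cyc_bound[OF lpos, of alpha x] unfolding Ms_def by linarith
qed
lemma be_bound: "\<bar>be x\<bar> \<le> Ms"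
proof -
  have "0 \<le> (\<Sum>j=1..l. \<bar>alpha j\<bar>)" by (rule sum_nonneg) simp
  thus ?thesis using cyc_bound[OF mpos, of beta x] unfolding Ms_def by linarith
qed

lemma LA_bound: "sig b \<le> x \<Longrightarrow> \<bar>LA b x\<bar> \<le> (Mw + Ms) * x"
proof -
  assume bx: "sig b \<le> x"
  have sp: "sig b > 0" by (rule sigma_pos)
  have "\<bar>LA b x\<bar> \<le> \<bar>sig b * per k u b\<bar> + \<bar>al (b+1) * (x - sig b)\<bar>"
    unfolding LA_def by (rule abs_triangle_ineq)
  also have "\<dots> = sig b * \<bar>per k u b\<bar> + \<bar>al (b+1)\<bar> * (x - sig b)" using sp bx by (simp add: abs_mult)
  also have "\<dots> \<le> x * Mw + Ms * x"
    using per_bound[of b] al_bound[of "b+1"] sp bx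
    by (intro add_mono mult_mono) auto
  finally show ?thesis by (simp add: algebra_simps)
qed

lemma LB_bound: "sig b \<le> x \<Longrightarrow> \<bar>LB b x\<bar> \<le> (Mw + Ms) * x"
proof -
  assume bx: "sig b \<le> x"
  have sp: "sig b > 0" by (rule sigma_pos)
  have "\<bar>LB b x\<bar> \<le> \<bar>sig b * per k v b\<bar> + \<bar>be (b+1) * (x - sig b)\<bar>"
    unfolding LB_def by (rule abs_triangle_ineq4)
  also have "\<dots> = sig b * \<bar>per k v b\<bar> + \<bar>be (b+1)\<bar> * (x - sig b)" using sp bx by (simp add: abs_mult)
  also have "\<dots> \<le> x * Mw + Ms * x"
    using per_bound[of b] be_bound[of "b+1"] sp bx
    by (intro add_mono mult_mono) auto
  finally show ?thesis by (simp add: algebra_simps)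
qed

lemma FF_bound: "x > 0 \<Longrightarrow> \<bar>FF j x\<bar> \<le> (Mw + Ms) * x"
proof -
  assume x: "x > 0"
  define s where "s = idx x"
  have sx: "sig s \<le> x" using idx[OF x] unfolding s_def by simp
  have FF: "FF j x = cline j s x" unfolding FF_def s_def using x by simp
  have ob: "0 \<le> offs j s" "offs j s < int nn" using offs_range by auto
  show ?thesis
  proof (cases "offs j s < int l")
    case True
    have "sig (s - offs j s) \<le> sig s" using ob by (simp add: sigma_le_iff)
    hence "\<bar>LA (s - offs j s) x\<bar> \<le> (Mw + Ms) * x" using sx by (intro LA_bound) simp
    thus ?thesis unfolding FF cline_def using True by simp
  next
    case False
    have "sig (s - offs j s + int l) \<le> sig s" using False by (simp add: sigma_le_iff)
    hence "\<bar>LB (s - offs j s + int l) x\<bar> \<le> (Mw + Ms) * x" using sx by (intro LB_bound) simp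
    thus ?thesis unfolding FF cline_def using False by simp
  qed
qed


lemma cells: "\<forall>a b. 0 < a \<longrightarrow> a < b \<longrightarrow> (\<exists>Y. finite Y \<and> a \<in> Y \<and> b \<in> Y \<and> Y \<subseteq> {a..b} \<and>
        (\<forall>c\<in>Y. \<forall>d\<in>Y. c<d \<longrightarrow> {c<..<d} \<inter> Y = {} \<longrightarrow>
          (\<exists>sl. (\<forall>j<nn. affine_with_slope (FF j) {c..d} (sl j)) \<and> mset (map sl [0..<nn]) = mset nuL)))"
proof (intro allI impI)
  fix a b :: real assume ab: "0 < a" "a < b"
  define I where "I = {s. a \<le> sig s \<and> sig s \<le> b}"
  obtain s0 where s0: "sig s0 < a" using sigma_below ab by blast
  obtain s1 where s1: "b < sig s1" using sigma_above by blast
  have "I \<subseteq> {s0..s1}"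
  proof
    fix s assume "s \<in> I"
    hence "sig s0 < sig s" "sig s < sig s1" using s0 s1 unfolding I_def by auto
    thus "s \<in> {s0..s1}" unfolding sigma_less_iff by auto
  qed
  hence finI: "finite I" using finite_subset by blast
  define Y where "Y = {a, b} \<union> sig ` I"
  have finY: "finite Y" unfolding Y_def using finI by simp
  have Ysub: "Y \<subseteq> {a..b}" unfolding Y_def I_def using ab by auto
  have gaps: "\<exists>sl. (\<forall>j<nn. affine_with_slope (FF j) {c..d} (sl j)) \<and> mset (map sl [0..<nn]) = mset nuL"
    if cd: "c \<in> Y" "d \<in> Y" "c < d" "{c<..<d} \<inter> Y = {}" for c d
  proof -
    have ac: "a \<le> c" "d \<le> b" using cd Ysub by auto
    hence cp: "c > 0" using ab by simp
    define s where "s = idx c"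
    have sc: "sig s \<le> c" "c < sig (s+1)" using idx[OF cp] unfolding s_def by auto
    have "d \<le> sig (s+1)"
    proof (rule ccontr)
      assume "\<not> d \<le> sig (s+1)"
      hence "s+1 \<in> I" unfolding I_def using sc ac by auto
      hence "sig (s+1) \<in> Y" unfolding Y_def by auto
      moreover have "sig (s+1) \<in> {c<..<d}" using sc `\<not> d \<le> sig (s+1)` by auto
      ultimately show False using cd(4) by blast
    qed
    hence sub: "{c..d} \<subseteq> {sig s..sig (s+1)}" using sc by auto
    have "\<forall>j<nn. affine_with_slope (FF j) {c..d} (cslope j s)"
      using affine_sub[OF FF_affine sub] by blast
    thus ?thesis using cslope_mset[of s] by (intro exI[of _ "\<lambda>j. cslope j s"]) simp
  qed
  show "\<exists>Y. finite Y \<and> a \<in> Y \<and> b \<in> Y \<and> Y \<subseteq> {a..b} \<and>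
        (\<forall>c\<in>Y. \<forall>d\<in>Y. c<d \<longrightarrow> {c<..<d} \<inter> Y = {} \<longrightarrow>
          (\<exists>sl. (\<forall>j<nn. affine_with_slope (FF j) {c..d} (sl j)) \<and> mset (map sl [0..<nn]) = mset nuL))"
  proof (intro exI[of _ Y] conjI ballI impI)
    show "a \<in> Y" "b \<in> Y" by (simp_all add: Y_def)
    fix c d assume "c \<in> Y" "d \<in> Y" "c < d" "{c<..<d} \<inter> Y = {}"
    thus "\<exists>sl. (\<forall>j<nn. affine_with_slope (FF j) {c..d} (sl j)) \<and> mset (map sl [0..<nn]) = mset nuL"
      by (rule gaps)
  qed (fact finY Ysub)+
qed

lemma nu_sys: "nu_system nn nuL (Pof nn FF)"
proof (rule generic[of nn FF "Mw + Ms"])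
  show "\<forall>j<nn. FF j 0 = 0" using FF0 by blast
  show "\<forall>j<nn. \<forall>x>0. \<bar>FF j x\<bar> \<le> (Mw + Ms) * x" using FF_bound by blast
qed (rule cells)


definition SA :: "int \<Rightarrow> (real \<times> real) set" where
  "SA s = closed_segment (sig s *\<^sub>R (1, per k u s)) (sig (s + int l) *\<^sub>R (1, per k v (s + int l)))"
definition SB :: "int \<Rightarrow> (real \<times> real) set" where
  "SB s = closed_segment (sig s *\<^sub>R (1, per k v s)) (sig (s + int m) *\<^sub>R (1, per k u (s + int m)))"

lemma SA_char: "SA s = {(x, LA s x) | x. sig s \<le> x \<and> x \<le> sig (s + int l)}"
proof -
  have lt: "sig s < sig (s + int l)" using lpos by (simp add: sigma_less_iff)
  have "EA u v s" using solE by blast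
  hence c: "(sig (s + int l) * per k v (s + int l) - sig s * per k u s) / (sig (s + int l) - sig s) = al (s+1)"
    unfolding EA_def using lt by simp
  have p: "sig s *\<^sub>R (1::real, per k u s) = (sig s, sig s * per k u s)" by simp
  have q: "sig (s + int l) *\<^sub>R (1::real, per k v (s + int l)) = (sig (s + int l), sig (s + int l) * per k v (s + int l))" by simp
  show ?thesis unfolding SA_def p q seg_char[OF lt] c LA_def ..
qed

lemma SB_char: "SB s = {(x, LB s x) | x. sig s \<le> x \<and> x \<le> sig (s + int m)}"
proof -
  have lt: "sig s < sig (s + int m)" using mpos by (simp add: sigma_less_iff)
  have "EB u v s" using solE by blast
  hence c: "(sig (s + int m) * per k u (s + int m) - sig s * per k v s) / (sig (s + int m) - sig s) = - be (s+1)"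
    unfolding EB_def using lt by simp
  have p: "sig s *\<^sub>R (1::real, per k v s) = (sig s, sig s * per k v s)" by simp
  have q: "sig (s + int m) *\<^sub>R (1::real, per k u (s + int m)) = (sig (s + int m), sig (s + int m) * per k u (s + int m))" by simp
  show ?thesis unfolding SB_def p q seg_char[OF lt] c LB_def by (simp add: algebra_simps)
qed

lemma Gset_eq: "Gset k l m rho u v = {0} \<union> (\<Union>s. SA s \<union> SB s)"
proof -
  have A: "segA k l rho u v r t = SA (r + t * int k)" for r t
  proof -
    have e: "r + int l + t * int k = (r + t * int k) + int l" by simp
    show ?thesis unfolding segA_def SA_def pt_eq e ..
  qed
  have B: "segB k m rho u v r t = SB (r + t * int k)" for r t
  proof -
    have e: "r + int m + t * int k = (r + t * int k) + int m" by simp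
    show ?thesis unfolding segB_def SB_def pt_eq e ..
  qed
  have "(\<Union>t::int. \<Union>r\<in>{0..<int k}. SA (r + t * int k) \<union> SB (r + t * int k)) = (\<Union>s. SA s \<union> SB s)"
  proof (rule set_eqI)
    fix z
    show "z \<in> (\<Union>t::int. \<Union>r\<in>{0..<int k}. SA (r + t * int k) \<union> SB (r + t * int k)) \<longleftrightarrow> z \<in> (\<Union>s. SA s \<union> SB s)"
    proof
      assume "z \<in> (\<Union>t::int. \<Union>r\<in>{0..<int k}. SA (r + t * int k) \<union> SB (r + t * int k))"
      thus "z \<in> (\<Union>s. SA s \<union> SB s)" by blast
    next
      assume "z \<in> (\<Union>s. SA s \<union> SB s)"
      then obtain s where zs: "z \<in> SA s \<union> SB s" by blast
      have r: "s mod int k \<in> {0..<int k}" using kpos by auto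
      have "s = s mod int k + (s div int k) * int k" by simp
      hence "z \<in> SA (s mod int k + (s div int k) * int k) \<union> SB (s mod int k + (s div int k) * int k)"
        using zs by simp
      thus "z \<in> (\<Union>t::int. \<Union>r\<in>{0..<int k}. SA (r + t * int k) \<union> SB (r + t * int k))" using r by blast
    qed
  qed
  thus ?thesis unfolding Gset_def A B by simp
qed

lemma cover: "a < b \<Longrightarrow> sig a \<le> x \<Longrightarrow> x \<le> sig b \<Longrightarrow> \<exists>t. a \<le> t \<and> t < b \<and> sig t \<le> x \<and> x \<le> sig (t+1)"
proof -
  assume ab: "a < b" "sig a \<le> x" "x \<le> sig b"
  have xp: "x > 0" using ab(2) sigma_pos[of a] by linarith
  show ?thesis
  proof (cases "x < sig b")
    case True
    define t where "t = idx x"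
    have t: "sig t \<le> x" "x < sig (t+1)" using idx[OF xp] unfolding t_def by auto
    have "a \<le> t"
    proof (rule ccontr)
      assume "\<not> a \<le> t"
      hence "t + 1 \<le> a" by simp
      hence "sig (t+1) \<le> sig a" by (simp add: sigma_le_iff)
      thus False using t ab by simp
    qed
    moreover have "t < b" using t True by (simp add: sigma_less_iff[symmetric])
    ultimately show ?thesis using t by (intro exI[of _ t]) auto
  next
    case False
    hence x: "x = sig b" using ab by simp
    have "sig (b - 1) \<le> sig b" by (simp add: sigma_le_iff)
    thus ?thesis using x ab(1) by (intro exI[of _ "b - 1"]) auto
  qed
qed

lemma offs_calc: "0 \<le> t - b \<Longrightarrow> t - b < int nn \<Longrightarrow> offs (nat (b mod int nn)) t = t - b"
proof -
  assume h: "0 \<le> t - b" "t - b < int nn"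
  have np: "(0::int) < int nn" using nn_pos by linarith
  have "0 \<le> b mod int nn" by (rule pos_mod_sign[OF np])
  hence "int (nat (b mod int nn)) = b mod int nn" by simp
  moreover have "b = b mod int nn + (b div int nn) * int nn" by (rule mod_div_mult_eq[symmetric])
  ultimately have "t - int (nat (b mod int nn)) = (t - b) + (b div int nn) * int nn" by linarith
  hence "offs (nat (b mod int nn)) t = (t - b) mod int nn" unfolding offs_def by (simp only: mod_mult_self1)
  thus ?thesis using h by simp
qed

lemma jlt: "nat (b mod int nn) < nn"
proof -
  have np: "(0::int) < int nn" using nn_pos by linarith
  have "b mod int nn < int nn" by (rule pos_mod_bound[OF np])
  moreover have "0 \<le> b mod int nn" by (rule pos_mod_sign[OF np])
  ultimately show ?thesis using nat_less_iff by blast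
qed

lemma graph_eq: "(\<Union>j\<in>{0..<nn}. {(x, FF j x) | x. 0 \<le> x}) = {0} \<union> (\<Union>s. SA s \<union> SB s)"
proof (rule set_eqI, rule iffI)
  fix z assume "z \<in> (\<Union>j\<in>{0..<nn}. {(x, FF j x) | x. 0 \<le> x})"
  then obtain j x where z: "z = (x, FF j x)" "0 \<le> x" by blast
  show "z \<in> {0} \<union> (\<Union>s. SA s \<union> SB s)"
  proof (cases "x = 0")
    case True thus ?thesis using z FF0 by (simp add: zero_prod_def)
  next
    case False
    hence xp: "x > 0" using z by simp
    define s where "s = idx x"
    have sx: "sig s \<le> x" "x < sig (s+1)" using idx[OF xp] unfolding s_def by auto
    have FF: "FF j x = cline j s x" unfolding FF_def s_def using xp by simp
    have ob: "0 \<le> offs j s" "offs j s < int nn" using offs_range by auto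
    show ?thesis
    proof (cases "offs j s < int l")
      case True
      have "sig (s - offs j s) \<le> sig s" using ob by (simp add: sigma_le_iff)
      moreover have "sig (s+1) \<le> sig (s - offs j s + int l)" using True by (simp add: sigma_le_iff)
      ultimately have "z \<in> SA (s - offs j s)" unfolding SA_char z FF cline_def using True sx by auto
      thus ?thesis by blast
    next
      case False
      have "sig (s - offs j s + int l) \<le> sig s" using False by (simp add: sigma_le_iff)
      moreover have "sig (s+1) \<le> sig (s - offs j s + int l + int m)" using ob by (simp add: sigma_le_iff)
      ultimately have "z \<in> SB (s - offs j s + int l)" unfolding SB_char z FF cline_def using False sx by auto
      thus ?thesis by blast
    qed
  qed
next
  fix z assume "z \<in> {0} \<union> (\<Union>s. SA s \<union> SB s)"
  then consider "z = 0" | s where "z \<in> SA s" | s where "z \<in> SB s" by blast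
  thus "z \<in> (\<Union>j\<in>{0..<nn}. {(x, FF j x) | x. 0 \<le> x})"
  proof cases
    case 1
    have "(0::real, FF 0 0) \<in> {(x, FF 0 x) | x. 0 \<le> x}" by blast
    moreover have "0 \<in> {0..<nn}" using nn_pos by simp
    ultimately show ?thesis using 1 FF0 by (force simp: zero_prod_def)
  next
    case (2 s)
    then obtain x where x: "z = (x, LA s x)" "sig s \<le> x" "x \<le> sig (s + int l)" unfolding SA_char by blast
    obtain t where t: "s \<le> t" "t < s + int l" "sig t \<le> x" "x \<le> sig (t+1)"
      using cover[of s "s + int l" x] x lpos by auto
    define j where "j = nat (s mod int nn)"
    have oj: "offs j t = t - s" unfolding j_def using t by (intro offs_calc) auto
    have "FF j x = cline j t x" using FF_cell t by blast
    also have "\<dots> = LA s x" unfolding cline_def oj using t by simp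
    finally have "z = (x, FF j x)" using x by simp
    moreover have "0 \<le> x" using x(2) sigma_pos[of s] by linarith
    moreover have "j \<in> {0..<nn}" unfolding j_def using jlt by simp
    ultimately show ?thesis by blast
  next
    case (3 s)
    then obtain x where x: "z = (x, LB s x)" "sig s \<le> x" "x \<le> sig (s + int m)" unfolding SB_char by blast
    obtain t where t: "s \<le> t" "t < s + int m" "sig t \<le> x" "x \<le> sig (t+1)"
      using cover[of s "s + int m" x] x mpos by auto
    define j where "j = nat ((s - int l) mod int nn)"
    have oj: "offs j t = t - (s - int l)" unfolding j_def using t by (intro offs_calc) auto
    have "FF j x = cline j t x" using FF_cell t by blast
    also have "\<dots> = LB s x" unfolding cline_def oj using t by simp
    finally have "z = (x, FF j x)" using x by simp
    moreover have "0 \<le> x" using x(2) sigma_pos[of s] by linarith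
    moreover have "j \<in> {0..<nn}" unfolding j_def using jlt by simp
    ultimately show ?thesis by blast
  qed
qed

lemma scale_pt: "tau *\<^sub>R (sig s *\<^sub>R (1, per k w s)) = sig (s + int k) *\<^sub>R (1, per k w (s + int k))"
proof -
  have "sig (s + 1 * int k) = tau powi 1 * sig s" by (rule sigma_add)
  moreover have "per k w (s + 1 * int k) = per k w s" by (rule per_add)
  ultimately show ?thesis by simp
qed

lemma scale_seg: "(\<lambda>\<eta>. c *\<^sub>R \<eta>) ` closed_segment (a :: real \<times> real) b = closed_segment (c *\<^sub>R a) (c *\<^sub>R b)"
proof -
  have "linear (\<lambda>\<eta>::real \<times> real. c *\<^sub>R \<eta>)" by (rule bounded_linear.linear[OF bounded_linear_scaleR_right])
  thus ?thesis using closed_segment_linear_image by metis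
qed

lemma SA_scale: "(\<lambda>\<eta>. tau *\<^sub>R \<eta>) ` SA s = SA (s + int k)"
proof -
  have e: "s + int k + int l = (s + int l) + int k" by simp
  show ?thesis unfolding SA_def scale_seg scale_pt e ..
qed

lemma SB_scale: "(\<lambda>\<eta>. tau *\<^sub>R \<eta>) ` SB s = SB (s + int k)"
proof -
  have e: "s + int k + int m = (s + int m) + int k" by simp
  show ?thesis unfolding SB_def scale_seg scale_pt e ..
qed

lemma G_inv: "(\<lambda>\<eta>. tau *\<^sub>R \<eta>) ` ({0} \<union> (\<Union>s. SA s \<union> SB s)) = {0} \<union> (\<Union>s. SA s \<union> SB s)"
proof -
  have "(\<lambda>\<eta>. tau *\<^sub>R \<eta>) ` ({0} \<union> (\<Union>s. SA s \<union> SB s)) = {0} \<union> (\<Union>s. SA (s + int k) \<union> SB (s + int k))"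
    by (simp only: image_Un image_UN SA_scale SB_scale) simp
  also have "(\<Union>s. SA (s + int k) \<union> SB (s + int k)) = (\<Union>s. SA s \<union> SB s)"
  proof (rule set_eqI, rule iffI)
    fix z assume "z \<in> (\<Union>s. SA (s + int k) \<union> SB (s + int k))" thus "z \<in> (\<Union>s. SA s \<union> SB s)" by blast
  next
    fix z assume "z \<in> (\<Union>s. SA s \<union> SB s)"
    then obtain s where "z \<in> SA s \<union> SB s" by blast
    hence "z \<in> SA ((s - int k) + int k) \<union> SB ((s - int k) + int k)" by simp
    thus "z \<in> (\<Union>s. SA (s + int k) \<union> SB (s + int k))" by blast
  qed
  finally show ?thesis .
qed

lemma main_regular: "is_regular_nu_graph nn nuL (Gset k l m rho u v)"
  unfolding is_regular_nu_graph_def is_nu_graph_def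
proof (intro conjI exI[of _ "Pof nn FF"] exI[of _ tau])
  show "nu_system nn nuL (Pof nn FF)" by (rule nu_sys)
  show "Gset k l m rho u v = nu_graph_of nn (Pof nn FF)" unfolding Gset_eq generic_graph graph_eq ..
  show "tau > 1" by (rule tau_gt1)
  show "(\<lambda>\<eta>. tau *\<^sub>R \<eta>) ` Gset k l m rho u v = Gset k l m rho u v" unfolding Gset_eq by (rule G_inv)
qed

end



theorem theorem2p1:
  fixes l m k :: nat and alpha beta rho :: "nat \<Rightarrow> real"
  assumes "l > 0" and "m > 0" and "k = lcm l m"
    and "\<forall>i\<in>{1..l}. alpha i \<ge> 0" and "\<forall>j\<in>{1..m}. beta j \<ge> 0"
    and "(\<exists>i\<in>{1..l}. alpha i \<noteq> 0) \<or> (\<exists>j\<in>{1..m}. beta j \<noteq> 0)"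
    and "(\<Sum>i=1..l. alpha i) = (\<Sum>j=1..m. beta j)"
    and "\<forall>i\<in>{1..k}. rho i > 1"
  shows "let nu = map alpha [1..<l+1] @ map (\<lambda>j. - beta j) [1..<m+1];
             slopes_ok = (\<lambda>u v.
               length u = k \<and> length v = k \<and>
               (\<forall>r\<in>{0..<int k}. \<forall>t::int.
                  slope (pt k rho u r t) (pt k rho v (r + int l) t) = cyc l alpha (r + 1) \<and>
                  slope (pt k rho v r t) (pt k rho u (r + int m) t) = - cyc m beta (r + 1)))
         in (\<exists>!uv. slopes_ok (fst uv) (snd uv)) \<and>
            (\<forall>u v. slopes_ok u v \<longrightarrow> is_regular_nu_graph (l + m) nu (Gset k l m rho u v))"
proof -
  have kpos: "k > 0" using assms(1,2,3) by (simp add: lcm_pos_nat)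
  interpret sys2 k rho l m alpha beta
    by unfold_locales (use kpos assms(1,2,3,8) in auto)
  have key: "(length u = k \<and> length v = k \<and>
               (\<forall>r\<in>{0..<int k}. \<forall>t::int.
                  slope (pt k rho u r t) (pt k rho v (r + int l) t) = cyc l alpha (r + 1) \<and>
                  slope (pt k rho v r t) (pt k rho u (r + int m) t) = - cyc m beta (r + 1)))
     \<longleftrightarrow> (length u = k \<and> length v = k \<and> (\<forall>s. EA u v s \<and> EB u v s))" for u v
    using slopes_equiv[of u v] by blast
  have ex1: "\<exists>!uv. length (fst uv) = k \<and> length (snd uv) = k \<and> (\<forall>s. EA (fst uv) (snd uv) s \<and> EB (fst uv) (snd uv) s)"
  proof (rule ex1I[of _ "(u0, v0)"])
    show "length (fst (u0, v0)) = k \<and> length (snd (u0, v0)) = k \<and> (\<forall>s. EA (fst (u0, v0)) (snd (u0, v0)) s \<and> EB (fst (u0, v0)) (snd (u0, v0)) s)"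
      using len_u0v0 u0v0_sol by simp
    fix uv assume "length (fst uv) = k \<and> length (snd uv) = k \<and> (\<forall>s. EA (fst uv) (snd uv) s \<and> EB (fst uv) (snd uv) s)"
    hence "fst uv = u0 \<and> snd uv = v0" using unique_sol by blast
    thus "uv = (u0, v0)" by (simp add: prod_eq_iff)
  qed
  have reg: "is_regular_nu_graph (l + m) (map alpha [1..<l+1] @ map (\<lambda>j. - beta j) [1..<m+1]) (Gset k l m rho u v)"
    if "length u = k" "length v = k" "\<forall>s. EA u v s \<and> EB u v s" for u v
  proof -
    interpret sol k rho l m alpha beta u v by unfold_locales (use that in auto)
    show ?thesis by (rule main_regular)
  qed
  show ?thesis unfolding Let_def key using ex1 reg by blast
qed


end
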